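(* Let $\varphi$ be a random dynamical system with memoryless noise on $X$ (setting in the context), let $\rho$ be an ergodic probability measure of the Markov transition probabilities $(\varphi_x^t)$, and let $O:=\{(\omega,x)\in\Omega\times X : x \text{ is asymptotically stable under } \omega\}$. The following are equivalent: (i) $(\mathbb{P}\otimes\rho)(O)=1$; (ii) $(\mathbb{P}\otimes\rho)(O)>0$; (iii) $\mathbb{P}(\omega : \exists \text{ open } U\subset X \text{ with } U\cap\mathrm{supp}\,\rho\neq\emptyset \text{ such that } U \text{ contracts under } \omega)>0$.
   Context: Setting. $\mathbb{T}$ is $\mathbb{Z}$ or $\mathbb{R}$, $\mathbb{T}^+ := \mathbb{T}\cap[0,\infty)$. $(\Omega,\mathcal{F})$ is a measurable space with sub-$\sigma$-algebras $(\mathcal{F}_s^{s+t})_{s\in\mathbb{T},t\in\mathbb{T}^+}$ such that $\mathcal{F}_{t_1}^{t_2}\subset\mathcal{F}_{t_0}^{t_3}$ whenever $t_0\le t_1\le t_2\le t_3$, and these generate $\mathcal{F}$. Write $\mathcal{F}_s^\infty:=\sigma(\mathcal{F}_s^{s+t}:t\in\mathbb{T}^+)$ and $\mathcal{F}_{-\infty}^t:=\sigma(\mathcal{F}_{t-s}^t:s\in\mathbb{T}^+)$. $(\theta^t)_{t\in\mathbb{T}}$ is a group of measurable maps $\Omega\to\Omega$ with $\theta^\tau\mathcal{F}_s^t=\mathcal{F}_{s-\tau}^{t-\tau}$. $\mathbb{P}$ is a probability measure on $(\Omega,\mathcal{F})$ with $\theta^t_*\mathbb{P}=\mathbb{P}$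 for all $t$, and such that for each $t$, $\mathcal{F}_{-\infty}^t$ and $\mathcal{F}_t^\infty$ are $\mathbb{P}$-independent. $(X,d)$ is a separable metric space which is a Borel subset of its $d$-completion. $\varphi=(\varphi(t,\omega))_{t\in\mathbb{T}^+,\omega\in\Omega}$ is a family of continuous maps $X\to X$ such that (a) $\omega\mapsto\varphi(t,\omega)x$ is $(\mathcal{F}_0^t,\mathcal{B}(X))$-measurable; (b) $\varphi(0,\omega)=\mathrm{id}_X$; (c) $\varphi(s+t,\omega)=\varphi(t,\theta^s\omega)\circ\varphi(s,\omega)$; (d) if $t_n\downarrow t$ in $\mathbb{T}^+$ and $x_n\to x$ then $\varphi(t_n,\omega)x_n\to\varphi(t,\omega)x$ for all $\omega$. The Markov transition probabilities are $\varphi_x^t(A):=\mathbb{P}(\omega:\varphi(t,\omega)x\in A)$; an ergodic probability measure of $(\varphi_x^t)$ is an ergodic stationary probability measure for these transition probabilities. A set $A\subset X$ contracts under $\omega$ if $\mathrm{diam}(\varphi(t,\omega)A)\to0$ as $t\to\infty$; $x$ is asymptotically stable under $\omega$ if some neighbourhood of $x$ contracts under $\omega$. (The set $O$ is $\mathcal{F}_0^\infty\otimes\mathcal{B}(X)$-measurable.) *)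

theory Defs
  imports "HOL-Probability.Probability"
begin

text \<open>Time is modelled inside the reals: the time set TT is either the integers
  (as a subset of the reals) or all of the reals. TTp is its nonnegative part.\<close>

definition TTp :: "real set \<Rightarrow> real set" where
  "TTp TT = TT \<inter> {0..}"

definition future_alg :: "'w measure \<Rightarrow> real set \<Rightarrow> (real \<Rightarrow> real \<Rightarrow> 'w set set) \<Rightarrow> real \<Rightarrow> 'w set set" where
  "future_alg P TT F s = sigma_sets (space P) (\<Union>t\<in>TTp TT. F s (s + t))"

definition past_alg :: "'w measure \<Rightarrow> real set \<Rightarrow> (real \<Rightarrow> real \<Rightarrow> 'w set set) \<Rightarrow> real \<Rightarrow> 'w set set" where
  "past_alg P TT F t = sigma_sets (space P) (\<Union>s\<in>TTp TT. F (t - s) t)"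

definition memoryless_noise ::
  "real set \<Rightarrow> 'w measure \<Rightarrow> (real \<Rightarrow> real \<Rightarrow> 'w set set) \<Rightarrow> (real \<Rightarrow> 'w \<Rightarrow> 'w) \<Rightarrow> bool" where
  "memoryless_noise TT P F \<theta> \<longleftrightarrow>
     (TT = \<int> \<or> TT = UNIV) \<and>
     prob_space P \<and>
     (\<forall>a\<in>TT. \<forall>b\<in>TT. a \<le> b \<longrightarrow> sigma_algebra (space P) (F a b) \<and> F a b \<subseteq> sets P) \<and>
     (\<forall>t0\<in>TT. \<forall>t1\<in>TT. \<forall>t2\<in>TT. \<forall>t3\<in>TT.
        t0 \<le> t1 \<and> t1 \<le> t2 \<and> t2 \<le> t3 \<longrightarrow> F t1 t2 \<subseteq> F t0 t3) \<and>
     sets P = sigma_sets (space P) (\<Union>{F a b | a b. a \<in> TT \<and> b \<in> TT \<and> a \<le> b}) \<and>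
     (\<forall>t\<in>TT. \<theta> t \<in> measurable P P) \<and>
     (\<forall>\<omega>\<in>space P. \<theta> 0 \<omega> = \<omega>) \<and>
     (\<forall>s\<in>TT. \<forall>t\<in>TT. \<forall>\<omega>\<in>space P. \<theta> (s + t) \<omega> = \<theta> s (\<theta> t \<omega>)) \<and>
     (\<forall>\<tau>\<in>TT. \<forall>s\<in>TT. \<forall>t\<in>TT. s \<le> t \<longrightarrow>
        (\<lambda>A. \<theta> \<tau> ` A) ` F s t = F (s - \<tau>) (t - \<tau>)) \<and>
     (\<forall>t\<in>TT. distr P P (\<theta> t) = P) \<and>
     (\<forall>t\<in>TT. prob_space.indep_set P (past_alg P TT F t) (future_alg P TT F t))"

text \<open>X is a Borel subset of a Polish space (its completion sits inside the closure of X),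
  carrying the restricted metric and the Borel sigma-algebra of its subspace topology.\<close>

abbreviation borelX :: "'x::metric_space set \<Rightarrow> 'x measure" where
  "borelX X \<equiv> restrict_space borel X"

definition RDS ::
  "real set \<Rightarrow> 'w measure \<Rightarrow> (real \<Rightarrow> real \<Rightarrow> 'w set set) \<Rightarrow> (real \<Rightarrow> 'w \<Rightarrow> 'w)
    \<Rightarrow> 'x::metric_space set \<Rightarrow> (real \<Rightarrow> 'w \<Rightarrow> 'x \<Rightarrow> 'x) \<Rightarrow> bool" where
  "RDS TT P F \<theta> X \<phi> \<longleftrightarrow>
     (\<forall>t\<in>TTp TT. \<forall>\<omega>\<in>space P. continuous_on X (\<phi> t \<omega>) \<and> \<phi> t \<omega> ` X \<subseteq> X) \<and>
     (\<forall>t\<in>TTp TT. \<forall>x\<in>X. (\<lambda>\<omega>. \<phi> t \<omega> x) \<in> measurable (sigma (space P) (F 0 t)) (borelX X)) \<and>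
     (\<forall>\<omega>\<in>space P. \<forall>x\<in>X. \<phi> 0 \<omega> x = x) \<and>
     (\<forall>s\<in>TTp TT. \<forall>t\<in>TTp TT. \<forall>\<omega>\<in>space P. \<forall>x\<in>X.
        \<phi> (s + t) \<omega> x = \<phi> t (\<theta> s \<omega>) (\<phi> s \<omega> x)) \<and>
     (\<forall>tn t xn x \<omega>. (\<forall>n. tn n \<in> TTp TT) \<and> t \<in> TTp TT \<and> decseq tn \<and> tn \<longlonglongrightarrow> t \<and>
        (\<forall>n. xn n \<in> X) \<and> x \<in> X \<and> xn \<longlonglongrightarrow> x \<and> \<omega> \<in> space P \<longrightarrow>
        (\<lambda>n. \<phi> (tn n) \<omega> (xn n)) \<longlonglongrightarrow> \<phi> t \<omega> x)"

definition transition :: "'w measure \<Rightarrow> 'x::metric_space set \<Rightarrow> (real \<Rightarrow> 'w \<Rightarrow> 'x \<Rightarrow> 'x)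
    \<Rightarrow> real \<Rightarrow> 'x \<Rightarrow> 'x measure" where
  "transition P X \<phi> t x = distr P (borelX X) (\<lambda>\<omega>. \<phi> t \<omega> x)"

definition stationary :: "real set \<Rightarrow> 'w measure \<Rightarrow> 'x::metric_space set
    \<Rightarrow> (real \<Rightarrow> 'w \<Rightarrow> 'x \<Rightarrow> 'x) \<Rightarrow> 'x measure \<Rightarrow> bool" where
  "stationary TT P X \<phi> \<rho> \<longleftrightarrow>
     prob_space \<rho> \<and> sets \<rho> = sets (borelX X) \<and>
     (\<forall>t\<in>TTp TT. \<forall>A\<in>sets (borelX X).
        emeasure \<rho> A = (\<integral>\<^sup>+ x. emeasure (transition P X \<phi> t x) A \<partial>\<rho>))"

definition ergodic_stationary :: "real set \<Rightarrow> 'w measure \<Rightarrow> 'x::metric_space set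
    \<Rightarrow> (real \<Rightarrow> 'w \<Rightarrow> 'x \<Rightarrow> 'x) \<Rightarrow> 'x measure \<Rightarrow> bool" where
  "ergodic_stationary TT P X \<phi> \<rho> \<longleftrightarrow>
     stationary TT P X \<phi> \<rho> \<and>
     (\<forall>A\<in>sets (borelX X).
        (\<forall>t\<in>TTp TT. AE x in \<rho>. emeasure (transition P X \<phi> t x) A = indicator A x)
        \<longrightarrow> emeasure \<rho> A = 0 \<or> emeasure \<rho> A = 1)"

text \<open>A contracts under omega: diam(phi(t,omega) A) -> 0 as t -> infinity in TT^+
  (the diameter written out via pairwise distances, so that unbounded images are not
  spuriously assigned diameter 0).\<close>

definition contracts :: "real set \<Rightarrow> (real \<Rightarrow> 'w \<Rightarrow> 'x::metric_space \<Rightarrow> 'x) \<Rightarrow> 'w \<Rightarrow> 'x set \<Rightarrow> bool" where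
  "contracts TT \<phi> \<omega> A \<longleftrightarrow>
     (\<forall>\<epsilon>>0. \<exists>t0. \<forall>t\<in>TTp TT. t \<ge> t0 \<longrightarrow>
        (\<forall>y\<in>A. \<forall>z\<in>A. dist (\<phi> t \<omega> y) (\<phi> t \<omega> z) \<le> \<epsilon>))"

definition asymp_stable :: "real set \<Rightarrow> 'x::metric_space set \<Rightarrow> (real \<Rightarrow> 'w \<Rightarrow> 'x \<Rightarrow> 'x)
    \<Rightarrow> 'w \<Rightarrow> 'x \<Rightarrow> bool" where
  "asymp_stable TT X \<phi> \<omega> x \<longleftrightarrow>
     (\<exists>N. N \<subseteq> X \<and> (\<exists>U. openin (top_of_set X) U \<and> x \<in> U \<and> U \<subseteq> N) \<and> contracts TT \<phi> \<omega> N)"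

definition supp :: "'x::metric_space set \<Rightarrow> 'x measure \<Rightarrow> 'x set" where
  "supp X \<rho> = {x \<in> X. \<forall>U. openin (top_of_set X) U \<and> x \<in> U \<longrightarrow> emeasure \<rho> U > 0}"

end

theory Submission
  imports Defs
begin

lemma measurable_sub:
  "f \<in> measurable M N \<Longrightarrow> space M = space M' \<Longrightarrow> sets M \<subseteq> sets M' \<Longrightarrow> f \<in> measurable M' N"
  by (auto simp: measurable_def)

locale rds_setting =
  fixes TT :: "real set" and P :: "'w measure" and F :: "real \<Rightarrow> real \<Rightarrow> 'w set set"
    and \<theta> :: "real \<Rightarrow> 'w \<Rightarrow> 'w" and X :: "'x::polish_space set"
    and \<phi> :: "real \<Rightarrow> 'w \<Rightarrow> 'x \<Rightarrow> 'x" and \<rho> :: "'x measure"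
  assumes noise: "memoryless_noise TT P F \<theta>"
    and X_borel: "X \<in> sets borel"
    and rds: "RDS TT P F \<theta> X \<phi>"
    and erg: "ergodic_stationary TT P X \<phi> \<rho>"
begin

lemma TT_cases: "TT = \<int> \<or> TT = UNIV" using noise by (simp add: memoryless_noise_def)
lemma P_prob: "prob_space P" using noise by (simp add: memoryless_noise_def)
lemma rho_prob: "prob_space \<rho>" using erg by (simp add: ergodic_stationary_def stationary_def)
lemma sets_rho: "sets \<rho> = sets (borelX X)" using erg by (simp add: ergodic_stationary_def stationary_def)
lemma space_rho: "space \<rho> = X"
  using sets_eq_imp_space_eq[OF sets_rho] by (simp add: space_restrict_space)

lemma TT_0: "0 \<in> TT" using TT_cases by auto
lemma TT_int: "real_of_int n \<in> TT" using TT_cases by auto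
lemma TT_nat: "real n \<in> TT" using TT_cases by (auto simp: Ints_of_nat)
lemma TT_add: "a \<in> TT \<Longrightarrow> b \<in> TT \<Longrightarrow> a + b \<in> TT" using TT_cases by (auto intro: Ints_add)
lemma TT_diff: "a \<in> TT \<Longrightarrow> b \<in> TT \<Longrightarrow> a - b \<in> TT" using TT_cases by (auto intro: Ints_diff)
lemma TTp_iff: "t \<in> TTp TT \<longleftrightarrow> t \<in> TT \<and> 0 \<le> t" by (simp add: TTp_def)

lemma F_sigma: "a \<in> TT \<Longrightarrow> b \<in> TT \<Longrightarrow> a \<le> b \<Longrightarrow> sigma_algebra (space P) (F a b)"
  using noise by (simp add: memoryless_noise_def)
lemma F_sets: "a \<in> TT \<Longrightarrow> b \<in> TT \<Longrightarrow> a \<le> b \<Longrightarrow> F a b \<subseteq> sets P"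
proof -
  have "\<forall>a\<in>TT. \<forall>b\<in>TT. a \<le> b \<longrightarrow> sigma_algebra (space P) (F a b) \<and> F a b \<subseteq> sets P"
    using noise unfolding memoryless_noise_def by (elim conjE) assumption
  then show "a \<in> TT \<Longrightarrow> b \<in> TT \<Longrightarrow> a \<le> b \<Longrightarrow> F a b \<subseteq> sets P" by simp
qed
lemma F_mono: "t0 \<in> TT \<Longrightarrow> t1 \<in> TT \<Longrightarrow> t2 \<in> TT \<Longrightarrow> t3 \<in> TT \<Longrightarrow> t0 \<le> t1 \<Longrightarrow> t1 \<le> t2 \<Longrightarrow> t2 \<le> t3
   \<Longrightarrow> F t1 t2 \<subseteq> F t0 t3"
proof -
  have "\<forall>t0\<in>TT. \<forall>t1\<in>TT. \<forall>t2\<in>TT. \<forall>t3\<in>TT.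
        t0 \<le> t1 \<and> t1 \<le> t2 \<and> t2 \<le> t3 \<longrightarrow> F t1 t2 \<subseteq> F t0 t3"
    using noise unfolding memoryless_noise_def by (elim conjE) assumption
  then show "t0 \<in> TT \<Longrightarrow> t1 \<in> TT \<Longrightarrow> t2 \<in> TT \<Longrightarrow> t3 \<in> TT \<Longrightarrow> t0 \<le> t1 \<Longrightarrow> t1 \<le> t2 \<Longrightarrow> t2 \<le> t3
   \<Longrightarrow> F t1 t2 \<subseteq> F t0 t3" by simp
qed
lemma theta_meas: "t \<in> TT \<Longrightarrow> \<theta> t \<in> measurable P P"
  using noise by (simp add: memoryless_noise_def)
lemma theta_0: "\<omega> \<in> space P \<Longrightarrow> \<theta> 0 \<omega> = \<omega>"
  using noise by (simp add: memoryless_noise_def)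
lemma theta_add: "s \<in> TT \<Longrightarrow> t \<in> TT \<Longrightarrow> \<omega> \<in> space P \<Longrightarrow> \<theta> (s + t) \<omega> = \<theta> s (\<theta> t \<omega>)"
  using noise by (simp add: memoryless_noise_def)
lemma theta_img: "\<tau> \<in> TT \<Longrightarrow> s \<in> TT \<Longrightarrow> t \<in> TT \<Longrightarrow> s \<le> t \<Longrightarrow> (\<lambda>A. \<theta> \<tau> ` A) ` F s t = F (s - \<tau>) (t - \<tau>)"
proof -
  have "\<forall>\<tau>\<in>TT. \<forall>s\<in>TT. \<forall>t\<in>TT. s \<le> t \<longrightarrow>
        (\<lambda>A. \<theta> \<tau> ` A) ` F s t = F (s - \<tau>) (t - \<tau>)"
    using noise unfolding memoryless_noise_def by (elim conjE) assumption
  then show "\<tau> \<in> TT \<Longrightarrow> s \<in> TT \<Longrightarrow> t \<in> TT \<Longrightarrow> s \<le> t \<Longrightarrow> (\<lambda>A. \<theta> \<tau> ` A) ` F s t = F (s - \<tau>) (t - \<tau>)"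
    by simp
qed
lemma theta_distr: "t \<in> TT \<Longrightarrow> distr P P (\<theta> t) = P"
  using noise by (simp add: memoryless_noise_def)
lemma indep: "t \<in> TT \<Longrightarrow> prob_space.indep_set P (past_alg P TT F t) (future_alg P TT F t)"
  using noise by (simp add: memoryless_noise_def)

lemma phi_cont: "t \<in> TTp TT \<Longrightarrow> \<omega> \<in> space P \<Longrightarrow> continuous_on X (\<phi> t \<omega>)"
  using rds by (simp add: RDS_def)
lemma phi_X: "t \<in> TTp TT \<Longrightarrow> \<omega> \<in> space P \<Longrightarrow> x \<in> X \<Longrightarrow> \<phi> t \<omega> x \<in> X"
  using rds by (auto simp: RDS_def)
lemma phi_meas: "t \<in> TTp TT \<Longrightarrow> x \<in> X \<Longrightarrow> (\<lambda>\<omega>. \<phi> t \<omega> x) \<in> measurable (sigma (space P) (F 0 t)) (borelX X)"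
  using rds by (simp add: RDS_def)
lemma phi_0: "\<omega> \<in> space P \<Longrightarrow> x \<in> X \<Longrightarrow> \<phi> 0 \<omega> x = x"
  using rds by (simp add: RDS_def)
lemma phi_cocycle: "s \<in> TTp TT \<Longrightarrow> t \<in> TTp TT \<Longrightarrow> \<omega> \<in> space P \<Longrightarrow> x \<in> X \<Longrightarrow>
   \<phi> (s + t) \<omega> x = \<phi> t (\<theta> s \<omega>) (\<phi> s \<omega> x)"
  using rds by (simp add: RDS_def)
lemma phi_rcont: "(\<forall>n. tn n \<in> TTp TT) \<Longrightarrow> t \<in> TTp TT \<Longrightarrow> decseq tn \<Longrightarrow> tn \<longlonglongrightarrow> t \<Longrightarrow>
        (\<forall>n. xn n \<in> X) \<Longrightarrow> x \<in> X \<Longrightarrow> xn \<longlonglongrightarrow> x \<Longrightarrow> \<omega> \<in> space P \<Longrightarrow>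
        (\<lambda>n. \<phi> (tn n) \<omega> (xn n)) \<longlonglongrightarrow> \<phi> t \<omega> x"
proof -
  have "\<forall>tn t xn x \<omega>. (\<forall>n. tn n \<in> TTp TT) \<and> t \<in> TTp TT \<and> decseq tn \<and> tn \<longlonglongrightarrow> t \<and>
        (\<forall>n. xn n \<in> X) \<and> x \<in> X \<and> xn \<longlonglongrightarrow> x \<and> \<omega> \<in> space P \<longrightarrow>
        (\<lambda>n. \<phi> (tn n) \<omega> (xn n)) \<longlonglongrightarrow> \<phi> t \<omega> x"
    using rds unfolding RDS_def by (elim conjE) assumption
  then show "(\<forall>n. tn n \<in> TTp TT) \<Longrightarrow> t \<in> TTp TT \<Longrightarrow> decseq tn \<Longrightarrow> tn \<longlonglongrightarrow> t \<Longrightarrow>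
        (\<forall>n. xn n \<in> X) \<Longrightarrow> x \<in> X \<Longrightarrow> xn \<longlonglongrightarrow> x \<Longrightarrow> \<omega> \<in> space P \<Longrightarrow>
        (\<lambda>n. \<phi> (tn n) \<omega> (xn n)) \<longlonglongrightarrow> \<phi> t \<omega> x" by blast
qed

lemma stat: "t \<in> TTp TT \<Longrightarrow> A \<in> sets (borelX X) \<Longrightarrow>
   emeasure \<rho> A = (\<integral>\<^sup>+ x. emeasure (transition P X \<phi> t x) A \<partial>\<rho>)"
  using erg by (simp add: ergodic_stationary_def stationary_def)
lemma ergodic: "A \<in> sets (borelX X) \<Longrightarrow>
   (\<forall>t\<in>TTp TT. AE x in \<rho>. emeasure (transition P X \<phi> t x) A = indicator A x) \<Longrightarrow>
   emeasure \<rho> A = 0 \<or> emeasure \<rho> A = 1"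
  using erg by (simp add: ergodic_stationary_def)

lemma F0t_sets: "t \<in> TTp TT \<Longrightarrow> F 0 t \<subseteq> sets P"
  using F_sets[of 0 t] TT_0 by (auto simp: TTp_iff)

lemma F0t_Pow: "t \<in> TTp TT \<Longrightarrow> F 0 t \<subseteq> Pow (space P)"
  using F0t_sets sets.space_closed by blast

lemma sets_sigma_F0t: "t \<in> TTp TT \<Longrightarrow> sets (sigma (space P) (F 0 t)) = F 0 t"
proof -
  assume t: "t \<in> TTp TT"
  have sa: "sigma_algebra (space P) (F 0 t)" using F_sigma[of 0 t] t TT_0 by (simp add: TTp_iff)
  have "sets (sigma (space P) (F 0 t)) = sigma_sets (space P) (F 0 t)"
    by (rule sets_measure_of[OF F0t_Pow[OF t]])
  also have "\<dots> = F 0 t" by (rule sigma_algebra.sigma_sets_eq[OF sa])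
  finally show ?thesis .
qed

lemma phi_meas_P: "t \<in> TTp TT \<Longrightarrow> x \<in> X \<Longrightarrow> (\<lambda>\<omega>. \<phi> t \<omega> x) \<in> measurable P (borelX X)"
  by (rule measurable_sub[OF phi_meas]) (auto simp: sets_sigma_F0t F0t_sets space_measure_of_conv)

end

definition dyad :: "real \<Rightarrow> nat \<Rightarrow> real" where
  "dyad t n = real_of_int \<lceil>t * 2^n\<rceil> / 2^n"

lemma dyad_ge: "t \<le> dyad t n"
proof -
  have "t * 2^n \<le> real_of_int \<lceil>t * 2^n\<rceil>" by (rule le_of_int_ceiling)
  then show ?thesis unfolding dyad_def by (simp add: field_simps)
qed

lemma dyad_less: "dyad t n < t + (1/2)^n"
proof -
  have "real_of_int \<lceil>t * 2^n\<rceil> < t * 2^n + 1" using ceiling_correct[of "t*2^n"] by linarith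
  then show ?thesis unfolding dyad_def by (simp add: field_simps power_one_over)
qed

lemma dyad_rat: "dyad t n \<in> \<rat>"
  unfolding dyad_def by (intro Rats_divide Rats_of_int Rats_power) simp_all

lemma dyad_decseq: "decseq (dyad t)"
proof (rule decseq_SucI)
  fix n
  have "\<lceil>t * 2^Suc n\<rceil> \<le> 2 * \<lceil>t * 2^n\<rceil>"
  proof -
    have "t * 2^Suc n = 2 * (t * 2^n)" by simp
    also have "\<dots> \<le> 2 * real_of_int \<lceil>t * 2^n\<rceil>" by (simp add: le_of_int_ceiling)
    finally show ?thesis by (simp add: ceiling_le_iff)
  qed
  then have "real_of_int \<lceil>t * 2^Suc n\<rceil> \<le> 2 * real_of_int \<lceil>t * 2^n\<rceil>" by linarith
  then show "dyad t (Suc n) \<le> dyad t n" unfolding dyad_def by (simp add: field_simps)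
qed

lemma dyad_lim: "dyad t \<longlonglongrightarrow> t"
proof (rule real_tendsto_sandwich[where f="\<lambda>n. t" and h="\<lambda>n. t + (1/2)^n"])
  show "\<forall>\<^sub>F n in sequentially. t \<le> dyad t n" by (simp add: dyad_ge)
  show "\<forall>\<^sub>F n in sequentially. dyad t n \<le> t + (1/2)^n" by (intro always_eventually allI less_imp_le dyad_less)
  show "(\<lambda>n. t) \<longlonglongrightarrow> t" by simp
  have "(\<lambda>n. t + (1/2::real)^n) \<longlonglongrightarrow> t + 0"
    by (intro tendsto_add tendsto_const LIMSEQ_power_zero) simp
  then show "(\<lambda>n. t + (1/2::real)^n) \<longlonglongrightarrow> t" by simp
qed

lemma dyad_int: "t \<in> \<int> \<Longrightarrow> dyad t n = t"
proof -
  assume "t \<in> \<int>"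
  then obtain k where k: "t = real_of_int k" by (auto elim: Ints_cases)
  have "t * 2^n = real_of_int (k * 2^n)" by (simp add: k)
  then have "\<lceil>t * 2^n\<rceil> = k * 2^n" by (metis ceiling_of_int)
  then show ?thesis unfolding dyad_def by (simp add: k)
qed

lemma countable_dense_subset:
  fixes X :: "'a::{second_countable_topology, metric_space} set"
  obtains D where "countable D" "D \<subseteq> X" "X \<subseteq> closure D"
proof -
  obtain B :: "'a set set" where B: "countable B" "\<And>C. C \<in> B \<Longrightarrow> open C"
    "\<And>S. open S \<Longrightarrow> \<exists>U. U \<subseteq> B \<and> S = \<Union>U"
    by (metis univ_second_countable)
  define D where "D = (\<lambda>b. SOME x. x \<in> b \<inter> X) ` {b\<in>B. b \<inter> X \<noteq> {}}"
  have "countable D" unfolding D_def using B(1) by auto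
  moreover have "D \<subseteq> X" unfolding D_def by (auto intro: someI2_ex)
  moreover have "X \<subseteq> closure D"
  proof
    fix x assume x: "x \<in> X"
    show "x \<in> closure D"
      unfolding closure_iff_nhds_not_empty
    proof (intro allI impI notI)
      fix A S assume "S \<subseteq> A" "open S" "x \<in> S" "D \<inter> A = {}"
      obtain U where U: "U \<subseteq> B" "S = \<Union>U" using B(3)[OF \<open>open S\<close>] by blast
      then obtain b where b: "b \<in> U" "x \<in> b" using \<open>x \<in> S\<close> by blast
      then have "b \<in> {b\<in>B. b \<inter> X \<noteq> {}}" using U x by auto
      then have "(SOME x. x \<in> b \<inter> X) \<in> D" unfolding D_def by blast
      moreover have "(SOME x. x \<in> b \<inter> X) \<in> b" using b x by (metis (mono_tags) IntD1 IntI someI)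
      ultimately show False using \<open>D \<inter> A = {}\<close> \<open>S \<subseteq> A\<close> U b by blast
    qed
  qed
  ultimately show ?thesis by (rule that)
qed

lemma openin_closure_dense:
  fixes X :: "'a::metric_space set"
  assumes U: "openin (top_of_set X) U" and D: "D \<subseteq> X" "X \<subseteq> closure D"
  shows "U \<subseteq> closure (U \<inter> D)"
proof
  fix y assume y: "y \<in> U"
  obtain e where e: "e > 0" "\<And>z. z \<in> X \<Longrightarrow> dist z y < e \<Longrightarrow> z \<in> U"
    using U y unfolding openin_euclidean_subtopology_iff by blast
  have yX: "y \<in> X" using U y openin_imp_subset by blast
  show "y \<in> closure (U \<inter> D)"
    unfolding closure_approachable
  proof (intro allI impI)
    fix \<epsilon> :: real assume "\<epsilon> > 0"
    have "y \<in> closure D" using yX D(2) by blast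
    moreover have "min e \<epsilon> > 0" using e(1) \<open>\<epsilon> > 0\<close> by simp
    ultimately obtain d where d: "d \<in> D" "dist d y < min e \<epsilon>"
      unfolding closure_approachable by blast
    then have "d \<in> U" using e D(1) by auto
    then show "\<exists>x\<in>U \<inter> D. dist x y < \<epsilon>" using d by auto
  qed
qed

lemma sets_lt: "f \<in> borel_measurable N \<Longrightarrow> {p\<in>space N. f p < (a::real)} \<in> sets N"
  by measurable
lemma sets_le: "f \<in> borel_measurable N \<Longrightarrow> {p\<in>space N. f p \<le> (a::real)} \<in> sets N"
  by measurable

lemma contracts_mono: "contracts TT \<phi> \<omega> A \<Longrightarrow> B \<subseteq> A \<Longrightarrow> contracts TT \<phi> \<omega> B"
  unfolding contracts_def by (meson subsetD)

context rds_setting begin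

definition Tq :: "real set" where "Tq = TTp TT \<inter> \<rat>"

lemma countable_Tq: "countable Tq"
  unfolding Tq_def by (rule countable_subset[OF _ countable_rat]) auto

lemma Tq_TTp: "t \<in> Tq \<Longrightarrow> t \<in> TTp TT" by (simp add: Tq_def)

lemma dyad_Tq: "t \<in> TTp TT \<Longrightarrow> dyad t n \<in> Tq"
proof -
  assume t: "t \<in> TTp TT"
  have "dyad t n \<in> TT"
  proof (cases "TT = \<int>")
    case True
    then have "t \<in> \<int>" using t by (simp add: TTp_def)
    then have "dyad t n = t" by (rule dyad_int)
    then show ?thesis using t by (simp add: TTp_iff)
  next
    case False
    then have "TT = UNIV" using TT_cases by simp
    then show ?thesis by simp
  qed
  moreover have "0 \<le> dyad t n" using t dyad_ge[of t n] by (simp add: TTp_iff)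
  ultimately show ?thesis using dyad_rat[of t n] by (simp add: Tq_def TTp_iff)
qed

lemma contracts_char:
  assumes \<omega>: "\<omega> \<in> space P" and UX: "U \<subseteq> X" and Ucl: "U \<subseteq> closure (U \<inter> D)"
  shows "contracts TT \<phi> \<omega> U \<longleftrightarrow>
    (\<forall>m::nat. \<exists>j::nat. \<forall>t\<in>Tq. real j \<le> t \<longrightarrow>
       (\<forall>y\<in>U \<inter> D. \<forall>z\<in>U \<inter> D. dist (\<phi> t \<omega> y) (\<phi> t \<omega> z) \<le> 1 / (real m + 1)))"
proof
  assume c: "contracts TT \<phi> \<omega> U"
  show "\<forall>m::nat. \<exists>j::nat. \<forall>t\<in>Tq. real j \<le> t \<longrightarrow>
       (\<forall>y\<in>U \<inter> D. \<forall>z\<in>U \<inter> D. dist (\<phi> t \<omega> y) (\<phi> t \<omega> z) \<le> 1 / (real m + 1))"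
  proof
    fix m :: nat
    have "(1::real) / (real m + 1) > 0" by simp
    then obtain t0 where t0: "\<forall>t\<in>TTp TT. t \<ge> t0 \<longrightarrow> (\<forall>y\<in>U. \<forall>z\<in>U. dist (\<phi> t \<omega> y) (\<phi> t \<omega> z) \<le> 1 / (real m + 1))"
      using c unfolding contracts_def by blast
    have "t0 \<le> real (nat \<lceil>t0\<rceil>)" by linarith
    then show "\<exists>j::nat. \<forall>t\<in>Tq. real j \<le> t \<longrightarrow>
       (\<forall>y\<in>U \<inter> D. \<forall>z\<in>U \<inter> D. dist (\<phi> t \<omega> y) (\<phi> t \<omega> z) \<le> 1 / (real m + 1))"
      using t0 Tq_TTp by (intro exI[of _ "nat \<lceil>t0\<rceil>"]) auto
  qed
next
  assume H: "\<forall>m::nat. \<exists>j::nat. \<forall>t\<in>Tq. real j \<le> t \<longrightarrow>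
       (\<forall>y\<in>U \<inter> D. \<forall>z\<in>U \<inter> D. dist (\<phi> t \<omega> y) (\<phi> t \<omega> z) \<le> 1 / (real m + 1))"
  show "contracts TT \<phi> \<omega> U"
    unfolding contracts_def
  proof (intro allI impI)
    fix \<epsilon> :: real assume "\<epsilon> > 0"
    then obtain m where m: "inverse (real (Suc m)) < \<epsilon>" using reals_Archimedean by blast
    define \<delta> where "\<delta> = 1 / (real m + 1)"
    have \<delta>\<epsilon>: "\<delta> \<le> \<epsilon>" using m by (simp add: \<delta>_def inverse_eq_divide add.commute)
    obtain j :: nat where j: "\<forall>t\<in>Tq. real j \<le> t \<longrightarrow>
       (\<forall>y\<in>U \<inter> D. \<forall>z\<in>U \<inter> D. dist (\<phi> t \<omega> y) (\<phi> t \<omega> z) \<le> \<delta>)"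
      using H unfolding \<delta>_def by blast
    show "\<exists>t0. \<forall>t\<in>TTp TT. t0 \<le> t \<longrightarrow> (\<forall>y\<in>U. \<forall>z\<in>U. dist (\<phi> t \<omega> y) (\<phi> t \<omega> z) \<le> \<epsilon>)"
    proof (intro exI[of _ "real j"] ballI impI)
      fix t y z assume t: "t \<in> TTp TT" "real j \<le> t" and y: "y \<in> U" and z: "z \<in> U"
      have step1: "dist (\<phi> t \<omega> y') (\<phi> t \<omega> z') \<le> \<delta>" if y': "y' \<in> U \<inter> D" and z': "z' \<in> U \<inter> D" for y' z'
      proof -
        have lim: "(\<lambda>n. \<phi> (dyad t n) \<omega> w) \<longlonglongrightarrow> \<phi> t \<omega> w" if "w \<in> X" for w
          using phi_rcont[of "dyad t" t "\<lambda>n. w" w \<omega>] dyad_Tq[OF t(1)] Tq_TTp t(1) dyad_decseq dyad_lim \<omega> that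
          by auto
        have "(\<lambda>n. dist (\<phi> (dyad t n) \<omega> y') (\<phi> (dyad t n) \<omega> z')) \<longlonglongrightarrow> dist (\<phi> t \<omega> y') (\<phi> t \<omega> z')"
          using y' z' UX by (intro tendsto_dist lim) auto
        moreover have "\<forall>n. dist (\<phi> (dyad t n) \<omega> y') (\<phi> (dyad t n) \<omega> z') \<le> \<delta>"
        proof
          fix n
          have "real j \<le> dyad t n" using t(2) dyad_ge[of t n] by linarith
          then show "dist (\<phi> (dyad t n) \<omega> y') (\<phi> (dyad t n) \<omega> z') \<le> \<delta>"
            using j dyad_Tq[OF t(1)] y' z' by blast
        qed
        ultimately show ?thesis by (intro LIMSEQ_le_const2) auto
      qed
      obtain ys where ys: "\<forall>n. ys n \<in> U \<inter> D" "ys \<longlonglongrightarrow> y"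
        using y Ucl closure_sequential by blast
      obtain zs where zs: "\<forall>n. zs n \<in> U \<inter> D" "zs \<longlonglongrightarrow> z"
        using z Ucl closure_sequential by blast
      have cont: "continuous_on X (\<phi> t \<omega>)" using phi_cont[OF t(1) \<omega>] .
      have cy: "(\<lambda>n. \<phi> t \<omega> (ys n)) \<longlonglongrightarrow> \<phi> t \<omega> y"
        using cont ys y UX unfolding continuous_on_sequentially by (auto simp: comp_def)
      have cz: "(\<lambda>n. \<phi> t \<omega> (zs n)) \<longlonglongrightarrow> \<phi> t \<omega> z"
        using cont zs z UX unfolding continuous_on_sequentially by (auto simp: comp_def)
      have "(\<lambda>n. dist (\<phi> t \<omega> (ys n)) (\<phi> t \<omega> (zs n))) \<longlonglongrightarrow> dist (\<phi> t \<omega> y) (\<phi> t \<omega> z)"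
        by (intro tendsto_dist cy cz)
      then have "dist (\<phi> t \<omega> y) (\<phi> t \<omega> z) \<le> \<delta>"
        by (rule LIMSEQ_le_const2) (use step1 ys zs in auto)
      then show "dist (\<phi> t \<omega> y) (\<phi> t \<omega> z) \<le> \<epsilon>" using \<delta>\<epsilon> by linarith
    qed
  qed
qed


definition D :: "'x set" where "D = (SOME D. countable D \<and> D \<subseteq> X \<and> X \<subseteq> closure D)"

lemma D_props: "countable D" "D \<subseteq> X" "X \<subseteq> closure D"
proof -
  obtain D0 where "countable D0" "D0 \<subseteq> X" "X \<subseteq> closure D0" by (rule countable_dense_subset)
  then have "\<exists>D. countable D \<and> D \<subseteq> X \<and> X \<subseteq> closure D" by blast
  from someI_ex[OF this] show "countable D" "D \<subseteq> X" "X \<subseteq> closure D" unfolding D_def by auto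
qed

definition Qst :: "'w \<Rightarrow> 'x \<Rightarrow> bool" where
  "Qst \<omega> x \<longleftrightarrow> (\<exists>k::nat. \<forall>m::nat. \<exists>j::nat. \<forall>t\<in>Tq. real j \<le> t \<longrightarrow>
     (\<forall>y\<in>D. \<forall>z\<in>D. dist x y < 1 / (real k + 1) \<longrightarrow> dist x z < 1 / (real k + 1) \<longrightarrow>
        dist (\<phi> t \<omega> y) (\<phi> t \<omega> z) \<le> 1 / (real m + 1)))"

lemma contracts_ball_iff:
  assumes \<omega>: "\<omega> \<in> space P"
  shows "contracts TT \<phi> \<omega> (X \<inter> ball x (1 / (real k + 1))) \<longleftrightarrow>
    (\<forall>m::nat. \<exists>j::nat. \<forall>t\<in>Tq. real j \<le> t \<longrightarrow>
     (\<forall>y\<in>D. \<forall>z\<in>D. dist x y < 1 / (real k + 1) \<longrightarrow> dist x z < 1 / (real k + 1) \<longrightarrow>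
        dist (\<phi> t \<omega> y) (\<phi> t \<omega> z) \<le> 1 / (real m + 1)))"
proof -
  let ?U = "X \<inter> ball x (1 / (real k + 1))"
  have op: "openin (top_of_set X) ?U" by (rule openin_open_Int) simp
  have cl: "?U \<subseteq> closure (?U \<inter> D)" by (rule openin_closure_dense[OF op D_props(2,3)])
  have UD: "\<And>y. y \<in> ?U \<inter> D \<longleftrightarrow> y \<in> D \<and> dist x y < 1 / (real k + 1)"
    using D_props(2) by auto
  have key: "\<And>Q. (\<forall>y\<in>?U \<inter> D. \<forall>z\<in>?U \<inter> D. Q y z) \<longleftrightarrow>
     (\<forall>y\<in>D. \<forall>z\<in>D. dist x y < 1 / (real k + 1) \<longrightarrow> dist x z < 1 / (real k + 1) \<longrightarrow> Q y z)"
    using UD by blast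
  show ?thesis
    unfolding contracts_char[OF \<omega> _ cl, simplified] by (simp only: key)
qed

lemma asymp_stable_iff:
  assumes \<omega>: "\<omega> \<in> space P" and x: "x \<in> X"
  shows "asymp_stable TT X \<phi> \<omega> x \<longleftrightarrow> Qst \<omega> x"
proof
  assume "asymp_stable TT X \<phi> \<omega> x"
  then obtain N U where N: "N \<subseteq> X" "openin (top_of_set X) U" "x \<in> U" "U \<subseteq> N" "contracts TT \<phi> \<omega> N"
    unfolding asymp_stable_def by blast
  have "\<forall>x\<in>U. \<exists>e>0. \<forall>x'\<in>X. dist x' x < e \<longrightarrow> x' \<in> U"
    using N(2) unfolding openin_euclidean_subtopology_iff by (rule conjunct2)
  then obtain e where e: "e > 0" "\<forall>x'\<in>X. dist x' x < e \<longrightarrow> x' \<in> U"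
    using N(3) by blast
  obtain k where k: "inverse (real (Suc k)) < e" using reals_Archimedean e(1) by blast
  have ke: "1 / (real k + 1) < e" using k by (simp add: inverse_eq_divide add.commute)
  have "X \<inter> ball x (1 / (real k + 1)) \<subseteq> N"
  proof
    fix y assume y: "y \<in> X \<inter> ball x (1 / (real k + 1))"
    then have "dist x y < 1 / (real k + 1)" by simp
    then have "dist y x < e" using ke by (simp add: dist_commute)
    then have "y \<in> U" using e(2) y by blast
    then show "y \<in> N" using N(4) by blast
  qed
  then have "contracts TT \<phi> \<omega> (X \<inter> ball x (1 / (real k + 1)))" by (rule contracts_mono[OF N(5)])
  then have "\<forall>m::nat. \<exists>j::nat. \<forall>t\<in>Tq. real j \<le> t \<longrightarrow>
     (\<forall>y\<in>D. \<forall>z\<in>D. dist x y < 1 / (real k + 1) \<longrightarrow> dist x z < 1 / (real k + 1) \<longrightarrow>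
        dist (\<phi> t \<omega> y) (\<phi> t \<omega> z) \<le> 1 / (real m + 1))"
    by (rule iffD1[OF contracts_ball_iff[OF \<omega>]])
  then show "Qst \<omega> x" unfolding Qst_def by (rule exI)
next
  assume "Qst \<omega> x"
  then obtain k where "\<forall>m::nat. \<exists>j::nat. \<forall>t\<in>Tq. real j \<le> t \<longrightarrow>
     (\<forall>y\<in>D. \<forall>z\<in>D. dist x y < 1 / (real k + 1) \<longrightarrow> dist x z < 1 / (real k + 1) \<longrightarrow>
        dist (\<phi> t \<omega> y) (\<phi> t \<omega> z) \<le> 1 / (real m + 1))"
    unfolding Qst_def by (elim exE)
  then have c: "contracts TT \<phi> \<omega> (X \<inter> ball x (1 / (real k + 1)))"
    by (rule iffD2[OF contracts_ball_iff[OF \<omega>]])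
  have o: "openin (top_of_set X) (X \<inter> ball x (1 / (real k + 1)))" by (rule openin_open_Int) simp
  have xin: "x \<in> X \<inter> ball x (1 / (real k + 1))" using x by simp
  show "asymp_stable TT X \<phi> \<omega> x" unfolding asymp_stable_def
    by (intro exI[of _ "X \<inter> ball x (1 / (real k + 1))"] conjI c o xin subset_refl Int_lower1)
qed

definition Ost :: "('w \<times> 'x) set" where
  "Ost = {(\<omega>, x). \<omega> \<in> space P \<and> x \<in> X \<and> asymp_stable TT X \<phi> \<omega> x}"

lemma Ost_sets:
  assumes sp: "space M = space P"
    and meas: "\<And>t y. t \<in> Tq \<Longrightarrow> y \<in> X \<Longrightarrow> (\<lambda>\<omega>. \<phi> t \<omega> y) \<in> measurable M (borelX X)"
  shows "Ost \<in> sets (M \<Otimes>\<^sub>M borelX X)"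
proof -
  have sp2: "space (M \<Otimes>\<^sub>M borelX X) = space P \<times> X"
    by (simp add: space_pair_measure space_restrict_space sp)
  have eq: "Ost = {p \<in> space (M \<Otimes>\<^sub>M borelX X). Qst (fst p) (snd p)}"
    unfolding sp2 Ost_def by (auto simp: asymp_stable_iff)
  have id: "(\<lambda>x. x) \<in> measurable (borelX X) borel" by (rule measurable_restrict_space1) simp
  have inner: "{p \<in> space (M \<Otimes>\<^sub>M borelX X). dist (snd p) y < a \<longrightarrow> dist (snd p) z < a \<longrightarrow>
        dist (\<phi> t (fst p) y) (\<phi> t (fst p) z) \<le> b} \<in> sets (M \<Otimes>\<^sub>M borelX X)"
    if t: "t \<in> Tq" and y: "y \<in> D" and z: "z \<in> D" for t y z a b
  proof -
    have my: "(\<lambda>\<omega>. \<phi> t \<omega> y) \<in> borel_measurable M"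
      using meas[OF t] y D_props(2) by (auto simp: measurable_restrict_space2_iff)
    have mz: "(\<lambda>\<omega>. \<phi> t \<omega> z) \<in> borel_measurable M"
      using meas[OF t] z D_props(2) by (auto simp: measurable_restrict_space2_iff)
    have ms: "(\<lambda>p. snd p) \<in> measurable (M \<Otimes>\<^sub>M borelX X) borel"
      by (rule measurable_compose[OF measurable_snd id])
    have dc: "\<And>w. (\<lambda>x. dist x w) \<in> borel_measurable borel"
      by (intro borel_measurable_continuous_onI continuous_intros)
    have f1: "\<And>w. (\<lambda>p. dist (snd p) w) \<in> borel_measurable (M \<Otimes>\<^sub>M borelX X)"
      using measurable_compose[OF ms dc] by simp
    have f2: "(\<lambda>p. dist (\<phi> t (fst p) y) (\<phi> t (fst p) z)) \<in> borel_measurable (M \<Otimes>\<^sub>M borelX X)"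
      using measurable_compose[OF measurable_fst borel_measurable_dist[OF my mz], of "borelX X"] by simp
    show ?thesis
      by (intro sets.sets_Collect_imp sets_lt sets_le f1 f2)
  qed
  show ?thesis
    unfolding eq Qst_def
    apply (rule sets.sets_Collect_countable_Ex)
    apply (rule sets.sets_Collect_countable_All)
    apply (rule sets.sets_Collect_countable_Ex)
    apply (rule sets.sets_Collect_countable_All'[OF _ countable_Tq])
    apply (rule sets.sets_Collect_imp)
     apply (rule sets.sets_Collect_countable_All'[OF _ D_props(1)])
     apply (rule sets.sets_Collect_countable_All'[OF _ D_props(1)])
     apply (rule inner; assumption)
    apply (rule sets.sets_Collect_const)
    done
qed

end

context rds_setting begin

lemma X_ne: "X \<noteq> {}"
  using prob_space.not_empty[OF rho_prob] space_rho by simp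

lemma D_ne: "D \<noteq> {}"
proof
  assume "D = {}"
  then have "X \<subseteq> {}" using D_props(3) by simp
  then show False using X_ne by simp
qed

definition dd :: "nat \<Rightarrow> 'x" where "dd = from_nat_into D"

lemma dd_D: "dd n \<in> D" unfolding dd_def using from_nat_into[OF D_ne] .
lemma dd_X: "dd n \<in> X" using dd_D D_props(2) by blast
lemma range_dd: "range dd = D" unfolding dd_def using D_ne D_props(1) by simp

lemma dd_close: "x \<in> X \<Longrightarrow> r > 0 \<Longrightarrow> \<exists>n. dist x (dd n) < r"
proof -
  assume x: "x \<in> X" and r: "r > 0"
  have "x \<in> closure D" using x D_props(3) by blast
  then obtain d where "d \<in> D" "dist d x < r" using r unfolding closure_approachable by blast
  then show ?thesis using range_dd by (metis dist_commute rangeE)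
qed

definition nk :: "nat \<Rightarrow> 'x \<Rightarrow> nat" where "nk k x = (LEAST n. dist x (dd n) < 1 / (real k + 1))"

lemma nk_close: "x \<in> X \<Longrightarrow> dist x (dd (nk k x)) < 1 / (real k + 1)"
  unfolding nk_def by (rule LeastI_ex) (rule dd_close, simp_all)

lemma id_borelX: "(\<lambda>x. x) \<in> measurable (borelX X) borel"
  by (rule measurable_restrict_space1) simp

lemma nk_meas: "nk k \<in> measurable (borelX X) (count_space UNIV)"
proof -
  have [measurable]: "\<And>n. (\<lambda>x. dist x (dd n)) \<in> borel_measurable (borelX X)"
    using measurable_compose[OF id_borelX, of "\<lambda>x. dist x w" for w]
    by (simp add: borel_measurable_continuous_onI continuous_intros)
  show ?thesis unfolding nk_def[abs_def] by measurable
qed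

definition Phi :: "real \<Rightarrow> 'w \<times> 'x \<Rightarrow> 'x" where "Phi t p = \<phi> t (fst p) (snd p)"

lemma Phi_meas_pair: "t \<in> TTp TT \<Longrightarrow> Phi t \<in> measurable (P \<Otimes>\<^sub>M borelX X) (borelX X)"
proof -
  assume t: "t \<in> TTp TT"
  let ?M = "P \<Otimes>\<^sub>M borelX X"
  have sp: "space ?M = space P \<times> X" by (simp add: space_pair_measure space_restrict_space)
  define g where "g k p = \<phi> t (fst p) (dd (nk k (snd p)))" for k p
  have gm: "g k \<in> borel_measurable ?M" for k
  proof -
    have f: "(\<lambda>p. \<phi> t (fst p) (dd i)) \<in> borel_measurable ?M" for i
      using measurable_compose[OF measurable_fst phi_meas_P[OF t dd_X, of i], of "borelX X"]
      by (simp add: measurable_restrict_space2_iff)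
    have gg: "(\<lambda>p. nk k (snd p)) \<in> measurable ?M (count_space UNIV)"
      by (rule measurable_compose[OF measurable_snd nk_meas])
    show ?thesis unfolding g_def by (rule measurable_compose_countable[OF f gg])
  qed
  have lim: "(\<lambda>k. g k p) \<longlonglongrightarrow> Phi t p" if p: "p \<in> space ?M" for p
  proof -
    obtain \<omega> x where px: "p = (\<omega>, x)" "\<omega> \<in> space P" "x \<in> X" using p sp by auto
    have "(\<lambda>k. dd (nk k x)) \<longlonglongrightarrow> x"
      unfolding tendsto_iff
      proof (intro allI impI)
        fix e :: real assume "e > 0"
        then obtain N where N: "inverse (real (Suc N)) < e" using reals_Archimedean by blast
        show "\<forall>\<^sub>F k in sequentially. dist (dd (nk k x)) x < e"
        proof (rule eventually_sequentiallyI[of N])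
          fix k assume "N \<le> k"
          then have "1 / (real k + 1) \<le> inverse (real (Suc N))"
            by (simp add: inverse_eq_divide divide_simps)
          then show "dist (dd (nk k x)) x < e"
            using nk_close[OF px(3), of k] N by (simp add: dist_commute)
        qed
      qed
    then have "(\<lambda>k. \<phi> t \<omega> (dd (nk k x))) \<longlonglongrightarrow> \<phi> t \<omega> x"
      using phi_cont[OF t px(2)] px(3) dd_X unfolding continuous_on_sequentially
      by (auto simp: comp_def)
    then show ?thesis using px by (simp add: g_def Phi_def)
  qed
  have "Phi t \<in> borel_measurable ?M"
    by (rule borel_measurable_LIMSEQ_metric[OF gm lim])
  moreover have "Phi t \<in> space ?M \<rightarrow> X" using phi_X[OF t] by (auto simp: sp Phi_def)
  ultimately show ?thesis by (simp add: measurable_restrict_space2_iff)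
qed

end

context rds_setting begin

lemma pair_PR: "pair_prob_space P \<rho>"
  by (simp add: pair_prob_space_def pair_sigma_finite_def prob_space_imp_sigma_finite P_prob rho_prob)

lemma pair_PR_sf: "pair_sigma_finite P \<rho>"
  using pair_PR by (simp add: pair_prob_space_def)

lemma sets_PR: "sets (P \<Otimes>\<^sub>M \<rho>) = sets (P \<Otimes>\<^sub>M borelX X)"
  by (rule sets_pair_measure_cong[OF refl sets_rho])

lemma space_PR: "space (P \<Otimes>\<^sub>M \<rho>) = space P \<times> X"
  by (simp add: space_pair_measure space_rho)

lemma Phi_meas: "t \<in> TTp TT \<Longrightarrow> Phi t \<in> measurable (P \<Otimes>\<^sub>M \<rho>) (borelX X)"
  using Phi_meas_pair by (simp add: measurable_cong_sets[OF sets_PR refl])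

lemma transition_emeasure:
  assumes t: "t \<in> TTp TT" and x: "x \<in> X" and A: "A \<in> sets (borelX X)"
  shows "emeasure (transition P X \<phi> t x) A = emeasure P {\<omega>\<in>space P. \<phi> t \<omega> x \<in> A}"
  unfolding transition_def
  by (subst emeasure_distr[OF phi_meas_P[OF t x] A]) (auto intro: arg_cong[where f="emeasure P"])

lemma Phi_distr:
  assumes t: "t \<in> TTp TT"
  shows "distr (P \<Otimes>\<^sub>M \<rho>) (borelX X) (Phi t) = \<rho>"
proof (rule measure_eqI)
  show "sets (distr (P \<Otimes>\<^sub>M \<rho>) (borelX X) (Phi t)) = sets \<rho>" by (simp add: sets_rho)
  fix A assume "A \<in> sets (distr (P \<Otimes>\<^sub>M \<rho>) (borelX X) (Phi t))"
  then have A: "A \<in> sets (borelX X)" by simp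
  have S: "Phi t -` A \<inter> space (P \<Otimes>\<^sub>M \<rho>) \<in> sets (P \<Otimes>\<^sub>M \<rho>)"
    by (rule measurable_sets[OF Phi_meas[OF t] A])
  have "emeasure (distr (P \<Otimes>\<^sub>M \<rho>) (borelX X) (Phi t)) A = emeasure (P \<Otimes>\<^sub>M \<rho>) (Phi t -` A \<inter> space (P \<Otimes>\<^sub>M \<rho>))"
    by (rule emeasure_distr[OF Phi_meas[OF t] A])
  also have "\<dots> = (\<integral>\<^sup>+ y. emeasure P ((\<lambda>x. (x, y)) -` (Phi t -` A \<inter> space (P \<Otimes>\<^sub>M \<rho>))) \<partial>\<rho>)"
    by (rule pair_sigma_finite.emeasure_pair_measure_alt2[OF pair_PR_sf S])
  also have "\<dots> = (\<integral>\<^sup>+ y. emeasure (transition P X \<phi> t y) A \<partial>\<rho>)"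
  proof (rule nn_integral_cong)
    fix y assume "y \<in> space \<rho>"
    then have y: "y \<in> X" by (simp add: space_rho)
    have "(\<lambda>x. (x, y)) -` (Phi t -` A \<inter> space (P \<Otimes>\<^sub>M \<rho>)) = {\<omega>\<in>space P. \<phi> t \<omega> y \<in> A}"
      using y by (auto simp: space_PR Phi_def)
    then show "emeasure P ((\<lambda>x. (x, y)) -` (Phi t -` A \<inter> space (P \<Otimes>\<^sub>M \<rho>))) = emeasure (transition P X \<phi> t y) A"
      by (simp add: transition_emeasure[OF t y A])
  qed
  also have "\<dots> = emeasure \<rho> A" by (rule stat[OF t A, symmetric])
  finally show "emeasure (distr (P \<Otimes>\<^sub>M \<rho>) (borelX X) (Phi t)) A = emeasure \<rho> A" .
qed

lemma Pt_joint_meas: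
  assumes t: "t \<in> TTp TT" and g: "g \<in> borel_measurable (borelX X)"
  shows "(\<lambda>p. g (\<phi> t (fst p) (snd p))) \<in> borel_measurable (P \<Otimes>\<^sub>M \<rho>)"
  using measurable_compose[OF Phi_meas[OF t] g] by (simp add: Phi_def comp_def)

lemma stat_nn:
  assumes t: "t \<in> TTp TT" and g: "g \<in> borel_measurable (borelX X)"
  shows "(\<integral>\<^sup>+ x. (\<integral>\<^sup>+ \<omega>. g (\<phi> t \<omega> x) \<partial>P) \<partial>\<rho>) = (\<integral>\<^sup>+ x. g x \<partial>\<rho>)"
proof -
  have "(\<integral>\<^sup>+ x. (\<integral>\<^sup>+ \<omega>. g (\<phi> t \<omega> x) \<partial>P) \<partial>\<rho>) = (\<integral>\<^sup>+ p. g (\<phi> t (fst p) (snd p)) \<partial>(P \<Otimes>\<^sub>M \<rho>))"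
    using pair_sigma_finite.nn_integral_snd[OF pair_PR_sf Pt_joint_meas[OF t g]] by simp
  also have "\<dots> = (\<integral>\<^sup>+ p. g (Phi t p) \<partial>(P \<Otimes>\<^sub>M \<rho>))" by (simp add: Phi_def)
  also have "\<dots> = (\<integral>\<^sup>+ y. g y \<partial>(distr (P \<Otimes>\<^sub>M \<rho>) (borelX X) (Phi t)))"
    by (rule nn_integral_distr[symmetric, OF Phi_meas[OF t]]) (simp add: g)
  also have "\<dots> = (\<integral>\<^sup>+ x. g x \<partial>\<rho>)" by (simp add: Phi_distr[OF t])
  finally show ?thesis .
qed

lemma Pt_meas:
  assumes t: "t \<in> TTp TT" and g: "g \<in> borel_measurable (borelX X)"
  shows "(\<lambda>x. \<integral>\<^sup>+ \<omega>. g (\<phi> t \<omega> x) \<partial>P) \<in> borel_measurable \<rho>"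
proof -
  interpret Ps: sigma_finite_measure P using P_prob by (rule prob_space_imp_sigma_finite)
  have eq: "(\<lambda>x. g (\<phi> t (fst (case x of (x, y) \<Rightarrow> (y, x))) (snd (case x of (x, y) \<Rightarrow> (y, x)))))
     = (\<lambda>(x, \<omega>). g (\<phi> t \<omega> x))" by (auto simp: fun_eq_iff split: prod.splits)
  have "(\<lambda>(x, \<omega>). g (\<phi> t \<omega> x)) \<in> borel_measurable (\<rho> \<Otimes>\<^sub>M P)"
    using measurable_compose[OF measurable_pair_swap' Pt_joint_meas[OF t g]] unfolding comp_def eq .
  then show ?thesis by (rule Ps.borel_measurable_nn_integral)
qed

end

lemma measurable_sub2:
  "f \<in> measurable M N \<Longrightarrow> space N' = space N \<Longrightarrow> sets N' \<subseteq> sets N \<Longrightarrow> f \<in> measurable M N'"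
  by (auto simp: measurable_def)

context rds_setting begin

definition FA :: "'w set set" where "FA = future_alg P TT F 0"
definition Pf :: "'w measure" where "Pf = sigma (space P) FA"
definition fS :: "'x \<Rightarrow> ennreal" where "fS x = emeasure P {\<omega>\<in>space P. (\<omega>, x) \<in> Ost}"

lemma gen0_sets: "(\<Union>s\<in>TTp TT. F 0 (0 + s)) \<subseteq> sets P"
  using F0t_sets by auto

lemma FA_sets: "FA \<subseteq> sets P"
  unfolding FA_def future_alg_def by (rule sets.sigma_sets_subset[OF gen0_sets])

lemma FA_Pow: "FA \<subseteq> Pow (space P)"
  using FA_sets sets.space_closed by blast

lemma sets_Pf: "sets Pf = FA"
proof -
  have "(\<Union>s\<in>TTp TT. F 0 (0 + s)) \<subseteq> Pow (space P)" using gen0_sets sets.space_closed by blast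
  then show ?thesis
    unfolding Pf_def using FA_Pow by (simp add: FA_def future_alg_def sigma_sets_sigma_sets_eq)
qed

lemma space_Pf: "space Pf = space P"
  unfolding Pf_def by (simp add: space_measure_of_conv)

lemma F0t_FA: "t \<in> TTp TT \<Longrightarrow> F 0 t \<subseteq> FA"
  unfolding FA_def future_alg_def by (auto intro!: sigma_sets.Basic)

lemma phi_meas_Pf: "t \<in> TTp TT \<Longrightarrow> x \<in> X \<Longrightarrow> (\<lambda>\<omega>. \<phi> t \<omega> x) \<in> measurable Pf (borelX X)"
  by (rule measurable_sub[OF phi_meas]) (auto simp: sets_sigma_F0t F0t_FA space_measure_of_conv space_Pf sets_Pf)

lemma Ost_Pf: "Ost \<in> sets (Pf \<Otimes>\<^sub>M borelX X)"
  by (rule Ost_sets[OF space_Pf phi_meas_Pf[OF Tq_TTp]])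

lemma Ost_P: "Ost \<in> sets (P \<Otimes>\<^sub>M borelX X)"
  by (rule Ost_sets[OF refl phi_meas_P[OF Tq_TTp]])

lemma Ost_PR: "Ost \<in> sets (P \<Otimes>\<^sub>M \<rho>)"
  using Ost_P sets_PR by simp

lemma Ost_sub: "Ost \<subseteq> space P \<times> X"
  unfolding Ost_def by auto

lemma slice_eq: "(\<lambda>\<omega>. (\<omega>, x)) -` Ost = {\<omega>\<in>space P. (\<omega>, x) \<in> Ost}"
  using Ost_sub by auto

lemma fS_meas_rho: "fS \<in> borel_measurable \<rho>"
  using pair_sigma_finite.measurable_emeasure_Pair2[OF pair_PR_sf Ost_PR]
  unfolding fS_def[abs_def] slice_eq .

lemma fS_meas: "fS \<in> borel_measurable (borelX X)"
  using fS_meas_rho by (simp add: measurable_cong_sets[OF sets_rho refl])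

lemma fS_le1: "fS x \<le> 1"
  unfolding fS_def by (rule prob_space.emeasure_le_1[OF P_prob])

lemma emeasure_Ost: "emeasure (P \<Otimes>\<^sub>M \<rho>) Ost = (\<integral>\<^sup>+ x. fS x \<partial>\<rho>)"
  using pair_sigma_finite.emeasure_pair_measure_alt2[OF pair_PR_sf Ost_PR]
  unfolding fS_def[abs_def] slice_eq .

lemma theta_space: "t \<in> TT \<Longrightarrow> \<omega> \<in> space P \<Longrightarrow> \<theta> t \<omega> \<in> space P"
  using measurable_space[OF theta_meas] by blast

lemma TT_uminus: "t \<in> TT \<Longrightarrow> - t \<in> TT"
  using TT_diff[OF TT_0] by (metis diff_0)

lemma theta_vimage:
  assumes t: "t \<in> TT" and A: "A \<subseteq> space P"
  shows "\<theta> t -` A \<inter> space P = \<theta> (- t) ` A"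
proof
  show "\<theta> t -` A \<inter> space P \<subseteq> \<theta> (- t) ` A"
  proof
    fix \<omega> assume \<omega>: "\<omega> \<in> \<theta> t -` A \<inter> space P"
    have "\<theta> (- t) (\<theta> t \<omega>) = \<theta> (- t + t) \<omega>" using theta_add[OF TT_uminus[OF t] t] \<omega> by simp
    also have "\<dots> = \<omega>" using theta_0 \<omega> by simp
    finally show "\<omega> \<in> \<theta> (- t) ` A" using \<omega> by (metis IntD1 image_eqI vimageD)
  qed
  show "\<theta> (- t) ` A \<subseteq> \<theta> t -` A \<inter> space P"
  proof
    fix \<omega> assume "\<omega> \<in> \<theta> (- t) ` A"
    then obtain a where a: "a \<in> A" "\<omega> = \<theta> (- t) a" by blast
    have aP: "a \<in> space P" using a A by blast
    have "\<theta> t \<omega> = \<theta> (t + - t) a" using theta_add[OF t TT_uminus[OF t] aP] a by simp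
    also have "\<dots> = a" using theta_0 aP by simp
    finally show "\<omega> \<in> \<theta> t -` A \<inter> space P" using a aP theta_space[OF TT_uminus[OF t]] by auto
  qed
qed

lemma future_gen:
  assumes t: "t \<in> TTp TT" and s: "s \<in> TTp TT" and A: "A \<in> F 0 s"
  shows "\<theta> t -` A \<inter> space P \<in> future_alg P TT F t"
proof -
  have tT: "t \<in> TT" and sT: "s \<in> TT" "0 \<le> s" using t s by (auto simp: TTp_iff)
  have AP: "A \<subseteq> space P" using A F0t_sets[OF s] sets.sets_into_space by blast
  have "\<theta> (- t) ` A \<in> (\<lambda>A. \<theta> (- t) ` A) ` F 0 s" using A by blast
  also have "\<dots> = F (0 - - t) (s - - t)" by (rule theta_img[OF TT_uminus[OF tT] TT_0 sT(1) sT(2)])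
  finally have "\<theta> (- t) ` A \<in> F t (t + s)" by (simp add: add.commute)
  then have "\<theta> (- t) ` A \<in> future_alg P TT F t"
    unfolding future_alg_def using s by (auto intro!: sigma_sets.Basic)
  then show ?thesis using theta_vimage[OF tT AP] by simp
qed

end

context rds_setting begin

lemma indep_key:
  assumes t: "t \<in> TTp TT" and x: "x \<in> X" and G: "G \<in> F 0 t"
  shows "emeasure P {\<omega>\<in>space P. \<omega> \<in> G \<and> (\<theta> t \<omega>, \<phi> t \<omega> x) \<in> Ost} =
         (\<integral>\<^sup>+ \<omega>. indicator G \<omega> * fS (\<phi> t \<omega> x) \<partial>P)"
proof -
  interpret Pp: prob_space P by (rule P_prob)
  have tT: "t \<in> TT" using t by (simp add: TTp_iff)
  define P0 where "P0 = sigma (space P) (F 0 t)"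
  have sets_P0: "sets P0 = F 0 t" unfolding P0_def by (rule sets_sigma_F0t[OF t])
  have space_P0: "space P0 = space P" unfolding P0_def by (simp add: space_measure_of_conv)
  define T where "T = P0 \<Otimes>\<^sub>M borelX X"
  define S where "S = Pf \<Otimes>\<^sub>M borelX X"
  define V1 where "V1 = (\<lambda>\<omega>. (\<theta> t \<omega>, x))"
  define V2 where "V2 = (\<lambda>\<omega>. (\<omega>, \<phi> t \<omega> x))"
  have th_Pf: "\<theta> t \<in> measurable P Pf"
    by (rule measurable_sub2[OF theta_meas[OF tT]]) (simp_all add: space_Pf sets_Pf FA_sets)
  have V1m: "V1 \<in> measurable P S"
    unfolding V1_def S_def by (rule measurable_Pair[OF th_Pf measurable_const]) (simp add: x space_restrict_space)
  have idP0: "(\<lambda>\<omega>. \<omega>) \<in> measurable P P0"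
    by (rule measurable_sub2[OF measurable_ident_sets[OF refl]]) (auto simp: space_P0 sets_P0 F0t_sets[OF t])
  have V2m: "V2 \<in> measurable P T"
    unfolding V2_def T_def by (rule measurable_Pair[OF idP0 phi_meas_P[OF t x]])
  have V2m0: "V2 \<in> measurable P0 T"
    unfolding V2_def T_def
    by (rule measurable_Pair[OF measurable_ident_sets[OF refl]]) (simp add: P0_def phi_meas[OF t x])
  have A1: "sigma_sets (space P) {V1 -` A \<inter> space P | A. A \<in> sets S} \<subseteq> future_alg P TT F t"
  proof -
    have sub: "{V1 -` A \<inter> space P | A. A \<in> sets S} \<subseteq> {\<theta> t -` A \<inter> space P | A. A \<in> sets Pf}"
    proof
      fix B assume "B \<in> {V1 -` A \<inter> space P | A. A \<in> sets S}"
      then obtain A where A: "A \<in> sets S" "B = V1 -` A \<inter> space P" by blast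
      have "(\<lambda>a. (a, x)) -` A \<in> sets Pf" using A(1) unfolding S_def by (rule sets_Pair2)
      moreover have "B = \<theta> t -` ((\<lambda>a. (a, x)) -` A) \<inter> space P" using A(2) by (auto simp: V1_def)
      ultimately show "B \<in> {\<theta> t -` A \<inter> space P | A. A \<in> sets Pf}" by blast
    qed
    let ?gen = "\<Union>s\<in>TTp TT. F 0 (0 + s)"
    have th: "\<theta> t \<in> space P \<rightarrow> space P" using theta_space[OF tT] by blast
    have "{\<theta> t -` A \<inter> space P | A. A \<in> sets Pf} = sigma_sets (space P) {\<theta> t -` A \<inter> space P | A. A \<in> ?gen}"
      unfolding sets_Pf FA_def future_alg_def by (rule sigma_sets_vimage_commute[OF th])
    also have "\<dots> \<subseteq> future_alg P TT F t"
    proof -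
      have "{\<theta> t -` A \<inter> space P | A. A \<in> ?gen} \<subseteq> future_alg P TT F t"
        using future_gen[OF t] by auto
      then show ?thesis unfolding future_alg_def by (rule sigma_sets_mono)
    qed
    finally have "{V1 -` A \<inter> space P | A. A \<in> sets S} \<subseteq> future_alg P TT F t"
      using sub by (rule order_trans[rotated])
    then show ?thesis unfolding future_alg_def by (rule sigma_sets_mono)
  qed
  have A2: "sigma_sets (space P) {V2 -` A \<inter> space P | A. A \<in> sets T} \<subseteq> past_alg P TT F t"
  proof -
    have "{V2 -` A \<inter> space P | A. A \<in> sets T} \<subseteq> F 0 t"
      using measurable_sets[OF V2m0] by (auto simp: space_P0 sets_P0)
    also have "F 0 t \<subseteq> past_alg P TT F t"
      unfolding past_alg_def using t by (auto intro!: sigma_sets.Basic)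
    finally show ?thesis unfolding past_alg_def by (rule sigma_sets_mono)
  qed
  have ind_pf: "Pp.indep_set (past_alg P TT F t) (future_alg P TT F t)" by (rule indep[OF tT])
  have ind: "Pp.indep_var S V1 T V2"
    unfolding Pp.indep_var_eq
  proof (intro conjI V1m V2m)
    show "Pp.indep_set (sigma_sets (space P) {V1 -` A \<inter> space P | A. A \<in> sets S})
       (sigma_sets (space P) {V2 -` A \<inter> space P | A. A \<in> sets T})"
    proof -
      have e1: "past_alg P TT F t \<subseteq> Pp.events" and e2: "future_alg P TT F t \<subseteq> Pp.events"
        and H: "\<forall>a\<in>past_alg P TT F t. \<forall>b\<in>future_alg P TT F t. Pp.prob (a \<inter> b) = Pp.prob a * Pp.prob b"
        using ind_pf unfolding Pp.indep_sets2_eq by blast+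
      show ?thesis unfolding Pp.indep_sets2_eq
      proof (intro conjI ballI)
        show "sigma_sets (space P) {V1 -` A \<inter> space P |A. A \<in> sets S} \<subseteq> Pp.events"
          using A1 e2 by (rule order_trans)
        show "sigma_sets (space P) {V2 -` A \<inter> space P |A. A \<in> sets T} \<subseteq> Pp.events"
          using A2 e1 by (rule order_trans)
        fix a b assume a: "a \<in> sigma_sets (space P) {V1 -` A \<inter> space P |A. A \<in> sets S}"
          and b: "b \<in> sigma_sets (space P) {V2 -` A \<inter> space P |A. A \<in> sets T}"
        have "Pp.prob (b \<inter> a) = Pp.prob b * Pp.prob a"
          using H a b A1 A2 by blast
        then show "Pp.prob (a \<inter> b) = Pp.prob a * Pp.prob b"
          by (metis Int_commute mult.commute)
      qed
    qed
  qed
  have deq: "distr P S V1 \<Otimes>\<^sub>M distr P T V2 = distr P (S \<Otimes>\<^sub>M T) (\<lambda>\<omega>. (V1 \<omega>, V2 \<omega>))"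
    using ind unfolding Pp.indep_var_distribution_eq by blast
  define Q where "Q = {q \<in> space (S \<Otimes>\<^sub>M T). fst (snd q) \<in> G \<and> (fst (fst q), snd (snd q)) \<in> Ost}"
  have Qs: "Q \<in> sets (S \<Otimes>\<^sub>M T)"
  proof -
    have m1: "(\<lambda>q. fst (snd q)) \<in> measurable (S \<Otimes>\<^sub>M T) P0"
      unfolding T_def by (rule measurable_compose[OF measurable_snd measurable_fst])
    have m2: "(\<lambda>q. (fst (fst q), snd (snd q))) \<in> measurable (S \<Otimes>\<^sub>M T) (Pf \<Otimes>\<^sub>M borelX X)"
      unfolding T_def S_def
      by (rule measurable_Pair[OF measurable_compose[OF measurable_fst measurable_fst]
            measurable_compose[OF measurable_snd measurable_snd]])
    have "(\<lambda>q. fst (snd q)) -` G \<inter> space (S \<Otimes>\<^sub>M T) \<in> sets (S \<Otimes>\<^sub>M T)"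
      using measurable_sets[OF m1] G sets_P0 by blast
    moreover have "(\<lambda>q. (fst (fst q), snd (snd q))) -` Ost \<inter> space (S \<Otimes>\<^sub>M T) \<in> sets (S \<Otimes>\<^sub>M T)"
      by (rule measurable_sets[OF m2 Ost_Pf])
    ultimately have "((\<lambda>q. fst (snd q)) -` G \<inter> space (S \<Otimes>\<^sub>M T)) \<inter>
        ((\<lambda>q. (fst (fst q), snd (snd q))) -` Ost \<inter> space (S \<Otimes>\<^sub>M T)) \<in> sets (S \<Otimes>\<^sub>M T)" by blast
    moreover have "Q = ((\<lambda>q. fst (snd q)) -` G \<inter> space (S \<Otimes>\<^sub>M T)) \<inter>
        ((\<lambda>q. (fst (fst q), snd (snd q))) -` Ost \<inter> space (S \<Otimes>\<^sub>M T))" unfolding Q_def by auto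
    ultimately show ?thesis by simp
  qed
  have Vm: "(\<lambda>\<omega>. (V1 \<omega>, V2 \<omega>)) \<in> measurable P (S \<Otimes>\<^sub>M T)"
    by (rule measurable_Pair[OF V1m V2m])
  have "{\<omega>\<in>space P. \<omega> \<in> G \<and> (\<theta> t \<omega>, \<phi> t \<omega> x) \<in> Ost} = (\<lambda>\<omega>. (V1 \<omega>, V2 \<omega>)) -` Q \<inter> space P"
    using measurable_space[OF Vm] unfolding Q_def V1_def V2_def by auto
  then have "emeasure P {\<omega>\<in>space P. \<omega> \<in> G \<and> (\<theta> t \<omega>, \<phi> t \<omega> x) \<in> Ost}
      = emeasure (distr P (S \<Otimes>\<^sub>M T) (\<lambda>\<omega>. (V1 \<omega>, V2 \<omega>))) Q"
    by (simp add: emeasure_distr[OF Vm Qs])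
  also have "\<dots> = emeasure (distr P S V1 \<Otimes>\<^sub>M distr P T V2) Q" by (simp add: deq)
  also have "\<dots> = (\<integral>\<^sup>+ b. emeasure (distr P S V1) ((\<lambda>a. (a, b)) -` Q) \<partial>distr P T V2)"
  proof -
    have ps1: "prob_space (distr P S V1)" by (rule Pp.prob_space_distr[OF V1m])
    have ps2: "prob_space (distr P T V2)" by (rule Pp.prob_space_distr[OF V2m])
    have "pair_sigma_finite (distr P S V1) (distr P T V2)"
      using ps1 ps2 by (simp add: pair_sigma_finite_def prob_space_imp_sigma_finite)
    moreover have "Q \<in> sets (distr P S V1 \<Otimes>\<^sub>M distr P T V2)" using Qs by simp
    ultimately show ?thesis by (rule pair_sigma_finite.emeasure_pair_measure_alt2)
  qed
  also have "\<dots> = (\<integral>\<^sup>+ b. indicator G (fst b) * fS (snd b) \<partial>distr P T V2)"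
  proof (rule nn_integral_cong)
    fix b assume "b \<in> space (distr P T V2)"
    then obtain \<omega> y where b: "b = (\<omega>, y)" "\<omega> \<in> space P" "y \<in> X"
      by (auto simp: T_def space_pair_measure space_P0 space_restrict_space)
    define S' where "S' = {a\<in>space P. (a, y) \<in> Ost}"
    define S2 where "S2 = {a\<in>space S. (fst a, y) \<in> Ost}"
    have S'Pf: "S' \<in> sets Pf"
    proof -
      have "(\<lambda>a. (a, y)) -` Ost \<in> sets Pf" by (rule sets_Pair2[OF Ost_Pf])
      then show ?thesis unfolding S'_def slice_eq .
    qed
    have S'P: "S' \<in> sets P" using S'Pf sets_Pf FA_sets by blast
    have S2s: "S2 \<in> sets S"
    proof -
      have "fst -` S' \<inter> space S \<in> sets S" unfolding S_def
        by (rule measurable_sets[OF measurable_fst]) (simp add: S'Pf)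
      moreover have "S2 = fst -` S' \<inter> space S"
        using Ost_sub by (auto simp: S2_def S'_def S_def space_pair_measure space_Pf)
      ultimately show ?thesis by simp
    qed
    have slice: "(\<lambda>a. (a, b)) -` Q = (if \<omega> \<in> G then S2 else {})"
      using b by (auto simp: Q_def S2_def space_pair_measure T_def space_P0 space_restrict_space)
    have "emeasure (distr P S V1) S2 = emeasure P (V1 -` S2 \<inter> space P)"
      by (rule emeasure_distr[OF V1m S2s])
    also have "V1 -` S2 \<inter> space P = \<theta> t -` S' \<inter> space P"
      using measurable_space[OF V1m] theta_space[OF tT] by (auto simp: V1_def S2_def S'_def)
    also have "emeasure P (\<theta> t -` S' \<inter> space P) = emeasure (distr P P (\<theta> t)) S'"
      by (simp add: emeasure_distr[OF theta_meas[OF tT] S'P])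
    also have "\<dots> = emeasure P S'" by (simp add: theta_distr[OF tT])
    also have "\<dots> = fS y" unfolding fS_def S'_def ..
    finally have "emeasure (distr P S V1) S2 = fS y" .
    then show "emeasure (distr P S V1) ((\<lambda>a. (a, b)) -` Q) = indicator G (fst b) * fS (snd b)"
      unfolding slice using b by (simp add: indicator_def)
  qed
  also have "\<dots> = (\<integral>\<^sup>+ \<omega>. indicator G (fst (V2 \<omega>)) * fS (snd (V2 \<omega>)) \<partial>P)"
  proof (rule nn_integral_distr[OF V2m])
    have "(\<lambda>b. indicator G (fst b) :: ennreal) \<in> borel_measurable T"
      unfolding T_def
      by (rule measurable_compose[OF measurable_fst]) (rule borel_measurable_indicator, simp add: sets_P0 G)
    moreover have "(\<lambda>b. fS (snd b)) \<in> borel_measurable T"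
      unfolding T_def by (rule measurable_compose[OF measurable_snd fS_meas])
    ultimately show "(\<lambda>b. indicator G (fst b) * fS (snd b)) \<in> borel_measurable (distr P T V2)"
      by simp
  qed
  also have "\<dots> = (\<integral>\<^sup>+ \<omega>. indicator G \<omega> * fS (\<phi> t \<omega> x) \<partial>P)" by (simp add: V2_def)
  finally show ?thesis .
qed

end

lemma ae_eq_from_le:
  fixes u g :: "'a \<Rightarrow> ennreal"
  assumes u: "u \<in> borel_measurable M" and g: "g \<in> borel_measurable M"
    and le: "AE x in M. g x \<le> u x"
    and eq: "(\<integral>\<^sup>+ x. u x \<partial>M) = (\<integral>\<^sup>+ x. g x \<partial>M)"
    and fin: "(\<integral>\<^sup>+ x. u x \<partial>M) \<noteq> \<infinity>"
  shows "AE x in M. u x = g x"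
proof -
  have fing: "(\<integral>\<^sup>+ x. g x \<partial>M) \<noteq> \<infinity>" using fin eq by simp
  have "(\<integral>\<^sup>+ x. u x - g x \<partial>M) = (\<integral>\<^sup>+ x. u x \<partial>M) - (\<integral>\<^sup>+ x. g x \<partial>M)"
    by (rule nn_integral_diff[OF u g fing le])
  also have "\<dots> = 0" using eq fin by (simp add: diff_eq_0_iff_ennreal top.not_eq_extremum)
  finally have "AE x in M. u x - g x = 0"
    using nn_integral_0_iff_AE[of "\<lambda>x. u x - g x" M] u g by simp
  then show ?thesis using le
  proof eventually_elim
    case (elim x)
    then show ?case by (metis antisym ennreal_minus_eq_0)
  qed
qed

context rds_setting begin

definition Oset :: "'x \<Rightarrow> 'w set" where "Oset x = {\<omega>\<in>space P. (\<omega>, x) \<in> Ost}"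

lemma fS_Oset: "fS x = emeasure P (Oset x)" unfolding fS_def Oset_def ..

lemma Oset_FA: "Oset x \<in> FA"
  using sets_Pair2[OF Ost_Pf, of x] unfolding slice_eq Oset_def sets_Pf .

lemma Oset_sets: "Oset x \<in> sets P"
  using Oset_FA FA_sets by blast

lemma Ost_cocycle:
  assumes t: "t \<in> TTp TT" and \<omega>: "\<omega> \<in> space P" and x: "x \<in> X"
    and st: "(\<theta> t \<omega>, \<phi> t \<omega> x) \<in> Ost"
  shows "(\<omega>, x) \<in> Ost"
proof -
  have tT: "t \<in> TT" "0 \<le> t" using t by (auto simp: TTp_iff)
  have "asymp_stable TT X \<phi> (\<theta> t \<omega>) (\<phi> t \<omega> x)" using st unfolding Ost_def by auto
  then obtain N U where N: "N \<subseteq> X" "openin (top_of_set X) U" "\<phi> t \<omega> x \<in> U" "U \<subseteq> N"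
      "contracts TT \<phi> (\<theta> t \<omega>) N"
    unfolding asymp_stable_def by blast
  define V where "V = X \<inter> \<phi> t \<omega> -` U"
  have Vo: "openin (top_of_set X) V"
    unfolding V_def by (rule continuous_openin_preimage[OF phi_cont[OF t \<omega>] _ N(2)]) (use phi_X[OF t \<omega>] in blast)
  have xV: "x \<in> V" using x N(3) by (simp add: V_def)
  have cV: "contracts TT \<phi> \<omega> V"
    unfolding contracts_def
  proof (intro allI impI)
    fix \<epsilon> :: real assume "\<epsilon> > 0"
    then obtain t0 where t0: "\<forall>s\<in>TTp TT. s \<ge> t0 \<longrightarrow> (\<forall>y\<in>N. \<forall>z\<in>N. dist (\<phi> s (\<theta> t \<omega>) y) (\<phi> s (\<theta> t \<omega>) z) \<le> \<epsilon>)"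
      using N(5) unfolding contracts_def by blast
    show "\<exists>t0. \<forall>s\<in>TTp TT. t0 \<le> s \<longrightarrow> (\<forall>y\<in>V. \<forall>z\<in>V. dist (\<phi> s \<omega> y) (\<phi> s \<omega> z) \<le> \<epsilon>)"
    proof (intro exI[of _ "t + max t0 0"] ballI impI)
      fix s y z assume s: "s \<in> TTp TT" "t + max t0 0 \<le> s" and y: "y \<in> V" and z: "z \<in> V"
      have r: "s - t \<in> TTp TT" using s tT TT_diff by (auto simp: TTp_iff)
      have sr: "s = t + (s - t)" by simp
      have yX: "y \<in> X" and zX: "z \<in> X" using y z by (auto simp: V_def)
      have "\<phi> s \<omega> y = \<phi> (s - t) (\<theta> t \<omega>) (\<phi> t \<omega> y)"
        using phi_cocycle[OF t r \<omega> yX] sr by simp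
      moreover have "\<phi> s \<omega> z = \<phi> (s - t) (\<theta> t \<omega>) (\<phi> t \<omega> z)"
        using phi_cocycle[OF t r \<omega> zX] sr by simp
      moreover have "\<phi> t \<omega> y \<in> N" "\<phi> t \<omega> z \<in> N" using y z N(4) by (auto simp: V_def)
      moreover have "s - t \<ge> t0" using s(2) by linarith
      ultimately show "dist (\<phi> s \<omega> y) (\<phi> s \<omega> z) \<le> \<epsilon>" using t0 r by metis
    qed
  qed
  have "V \<subseteq> X" unfolding V_def by blast
  then have "asymp_stable TT X \<phi> \<omega> x"
    unfolding asymp_stable_def using Vo xV cV by blast
  then show ?thesis unfolding Ost_def using \<omega> x by simp
qed

lemma super_G:
  assumes t: "t \<in> TTp TT" and x: "x \<in> X" and G: "G \<in> F 0 t"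
  shows "(\<integral>\<^sup>+ \<omega>. indicator G \<omega> * fS (\<phi> t \<omega> x) \<partial>P) \<le> emeasure P (Oset x \<inter> G)"
proof -
  have GP: "G \<in> sets P" using G F0t_sets[OF t] by blast
  have "(\<integral>\<^sup>+ \<omega>. indicator G \<omega> * fS (\<phi> t \<omega> x) \<partial>P) = emeasure P {\<omega>\<in>space P. \<omega> \<in> G \<and> (\<theta> t \<omega>, \<phi> t \<omega> x) \<in> Ost}"
    by (rule indep_key[OF t x G, symmetric])
  also have "\<dots> \<le> emeasure P (Oset x \<inter> G)"
    by (rule emeasure_mono) (use Ost_cocycle[OF t _ x] Oset_sets GP in \<open>auto simp: Oset_def\<close>)
  finally show ?thesis .
qed

lemma space_F0t: "t \<in> TTp TT \<Longrightarrow> space P \<in> F 0 t"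
proof -
  assume t: "t \<in> TTp TT"
  interpret sa: sigma_algebra "space P" "F 0 t" using F_sigma[of 0 t] TT_0 t by (simp add: TTp_iff)
  show ?thesis by (rule sa.top)
qed

lemma super:
  assumes t: "t \<in> TTp TT" and x: "x \<in> X"
  shows "(\<integral>\<^sup>+ \<omega>. fS (\<phi> t \<omega> x) \<partial>P) \<le> fS x"
proof -
  have "(\<integral>\<^sup>+ \<omega>. fS (\<phi> t \<omega> x) \<partial>P) = (\<integral>\<^sup>+ \<omega>. indicator (space P) \<omega> * fS (\<phi> t \<omega> x) \<partial>P)"
    by (rule nn_integral_cong) simp
  also have "\<dots> \<le> emeasure P (Oset x \<inter> space P)" by (rule super_G[OF t x space_F0t[OF t]])
  also have "Oset x \<inter> space P = Oset x" by (auto simp: Oset_def)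
  finally show ?thesis by (simp add: fS_Oset)
qed

lemma fS_phi_meas: "t \<in> TTp TT \<Longrightarrow> x \<in> X \<Longrightarrow> (\<lambda>\<omega>. fS (\<phi> t \<omega> x)) \<in> borel_measurable P"
  by (rule measurable_compose[OF phi_meas_P fS_meas])

lemma space_borelX: "space (borelX X) = X" by (simp add: space_restrict_space)

end

context rds_setting begin

definition Ac :: "real \<Rightarrow> 'x set" where "Ac c = {y\<in>X. ennreal c \<le> fS y}"

lemma Ac_sets: "Ac c \<in> sets (borelX X)"
proof -
  have [measurable]: "fS \<in> borel_measurable (borelX X)" by (rule fS_meas)
  have "{y\<in>space (borelX X). ennreal c \<le> fS y} \<in> sets (borelX X)" by measurable
  then show ?thesis by (simp add: Ac_def space_borelX)
qed

lemma Ac_rho: "Ac c \<in> sets \<rho>" using Ac_sets sets_rho by simp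

lemma level_invariant:
  assumes t: "t \<in> TTp TT"
  shows "AE x in \<rho>. emeasure (transition P X \<phi> t x) (Ac c) = indicator (Ac c) x"
proof -
  interpret Pp: prob_space P by (rule P_prob)
  interpret R: prob_space \<rho> by (rule rho_prob)
  let ?A = "Ac c"
  define h where "h y = min (fS y) (ennreal c)" for y
  have hm: "h \<in> borel_measurable (borelX X)" unfolding h_def[abs_def] using fS_meas by measurable
  have hmr: "h \<in> borel_measurable \<rho>" using hm by (simp add: measurable_cong_sets[OF sets_rho refl])
  define Ph where "Ph x = (\<integral>\<^sup>+ \<omega>. h (\<phi> t \<omega> x) \<partial>P)" for x
  have Phm: "Ph \<in> borel_measurable \<rho>" unfolding Ph_def[abs_def] by (rule Pt_meas[OF t hm])
  have Ph_le: "Ph x \<le> h x" if x: "x \<in> X" for x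
  proof -
    have "Ph x \<le> (\<integral>\<^sup>+ \<omega>. fS (\<phi> t \<omega> x) \<partial>P)" unfolding Ph_def h_def by (intro nn_integral_mono) simp
    also have "\<dots> \<le> fS x" by (rule super[OF t x])
    finally have 1: "Ph x \<le> fS x" .
    have "Ph x \<le> (\<integral>\<^sup>+ \<omega>. ennreal c \<partial>P)" unfolding Ph_def h_def by (intro nn_integral_mono) simp
    also have "\<dots> = ennreal c" by (simp add: Pp.emeasure_space_1)
    finally have 2: "Ph x \<le> ennreal c" .
    show ?thesis using 1 2 by (simp add: h_def)
  qed
  have hfin: "(\<integral>\<^sup>+ x. h x \<partial>\<rho>) \<noteq> \<infinity>"
  proof -
    have "(\<integral>\<^sup>+ x. h x \<partial>\<rho>) \<le> (\<integral>\<^sup>+ x. ennreal c \<partial>\<rho>)" unfolding h_def by (intro nn_integral_mono) simp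
    also have "\<dots> = ennreal c" by (simp add: R.emeasure_space_1)
    finally show ?thesis by (metis ennreal_neq_top infinity_ennreal_def neq_top_trans)
  qed
  have ae1: "AE x in \<rho>. h x = Ph x"
  proof (rule ae_eq_from_le[OF hmr Phm])
    show "AE x in \<rho>. Ph x \<le> h x" using Ph_le by (intro AE_I2) (simp add: space_rho)
    show "(\<integral>\<^sup>+ x. h x \<partial>\<rho>) = (\<integral>\<^sup>+ x. Ph x \<partial>\<rho>)" unfolding Ph_def by (rule stat_nn[OF t hm, symmetric])
  qed (rule hfin)
  have goodA: "emeasure P {\<omega>\<in>space P. \<phi> t \<omega> x \<in> ?A} = 1"
    if x: "x \<in> X" and xA: "x \<in> ?A" and hx: "h x = Ph x" for x
  proof -
    have hc: "h x = ennreal c" using xA by (simp add: h_def Ac_def min_absorb2)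
    let ?g = "\<lambda>\<omega>. h (\<phi> t \<omega> x)"
    have gm: "?g \<in> borel_measurable P" by (rule measurable_compose[OF phi_meas_P[OF t x] hm])
    have "AE \<omega> in P. (\<lambda>\<omega>. ennreal c) \<omega> = ?g \<omega>"
    proof (rule ae_eq_from_le)
      show "(\<lambda>\<omega>. ennreal c) \<in> borel_measurable P" by simp
      show "?g \<in> borel_measurable P" by (rule gm)
      show "AE \<omega> in P. ?g \<omega> \<le> ennreal c" by (simp add: h_def)
      show "(\<integral>\<^sup>+ \<omega>. ennreal c \<partial>P) = (\<integral>\<^sup>+ \<omega>. ?g \<omega> \<partial>P)"
        using hx hc by (simp add: Ph_def Pp.emeasure_space_1)
      show "(\<integral>\<^sup>+ \<omega>. ennreal c \<partial>P) \<noteq> \<infinity>" by (simp add: Pp.emeasure_space_1)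
    qed
    then have "AE \<omega> in P. \<omega> \<in> {\<omega>\<in>space P. \<phi> t \<omega> x \<in> ?A}"
    proof (rule AE_mp[OF _ AE_I2])
      fix \<omega> assume \<omega>: "\<omega> \<in> space P"
      show "ennreal c = h (\<phi> t \<omega> x) \<longrightarrow> \<omega> \<in> {\<omega> \<in> space P. \<phi> t \<omega> x \<in> ?A}"
        using \<omega> phi_X[OF t \<omega> x] by (auto simp: h_def Ac_def min_def split: if_splits)
    qed
    moreover have "{\<omega>\<in>space P. \<phi> t \<omega> x \<in> ?A} \<in> sets P"
    proof -
      have "{\<omega>\<in>space P. \<phi> t \<omega> x \<in> ?A} = (\<lambda>\<omega>. \<phi> t \<omega> x) -` ?A \<inter> space P" by blast
      then show ?thesis using measurable_sets[OF phi_meas_P[OF t x] Ac_sets] by simp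
    qed
    ultimately show ?thesis by (intro Pp.emeasure_eq_1_AE)
  qed
  define Pu where "Pu x = (\<integral>\<^sup>+ \<omega>. indicator ?A (\<phi> t \<omega> x) \<partial>P)" for x
  have iAm: "indicator ?A \<in> borel_measurable (borelX X)" using Ac_sets by simp
  have Pum: "Pu \<in> borel_measurable \<rho>" unfolding Pu_def[abs_def] by (rule Pt_meas[OF t iAm])
  have Pu_tr: "Pu x = emeasure (transition P X \<phi> t x) ?A" if x: "x \<in> X" for x
  proof -
    have "{\<omega>\<in>space P. \<phi> t \<omega> x \<in> ?A} \<in> sets P"
    proof -
      have "{\<omega>\<in>space P. \<phi> t \<omega> x \<in> ?A} = (\<lambda>\<omega>. \<phi> t \<omega> x) -` ?A \<inter> space P" by blast
      then show ?thesis using measurable_sets[OF phi_meas_P[OF t x] Ac_sets] by simp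
    qed
    moreover have "Pu x = (\<integral>\<^sup>+ \<omega>. indicator {\<omega>\<in>space P. \<phi> t \<omega> x \<in> ?A} \<omega> \<partial>P)"
      unfolding Pu_def by (rule nn_integral_cong) (simp add: indicator_def)
    ultimately have "Pu x = emeasure P {\<omega>\<in>space P. \<phi> t \<omega> x \<in> ?A}" by simp
    then show ?thesis by (simp add: transition_emeasure[OF t x Ac_sets])
  qed
  have iAr: "indicator ?A \<in> borel_measurable \<rho>" using Ac_rho by simp
  have ae2: "AE x in \<rho>. Pu x = indicator ?A x"
  proof (rule ae_eq_from_le[OF Pum iAr])
    show "AE x in \<rho>. indicator ?A x \<le> Pu x"
      using ae1
    proof eventually_elim
      case (elim x)
      show ?case
      proof (cases "x \<in> ?A")
        case True
        then have x: "x \<in> X" by (simp add: Ac_def)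
        have "Pu x = 1" using goodA[OF x True elim] Pu_tr[OF x] transition_emeasure[OF t x Ac_sets] by simp
        then show ?thesis using True by simp
      qed simp
    qed
    show eq: "(\<integral>\<^sup>+ x. Pu x \<partial>\<rho>) = (\<integral>\<^sup>+ x. indicator ?A x \<partial>\<rho>)" unfolding Pu_def by (rule stat_nn[OF t iAm])
    have "(\<integral>\<^sup>+ x. indicator ?A x \<partial>\<rho>) = emeasure \<rho> ?A" using Ac_rho by simp
    also have "\<dots> \<noteq> \<infinity>" by (simp add: R.emeasure_finite)
    finally show "(\<integral>\<^sup>+ x. Pu x \<partial>\<rho>) \<noteq> \<infinity>" using eq by simp
  qed
  show ?thesis using ae2 by (rule AE_mp) (auto intro!: AE_I2 simp: space_rho Pu_tr)
qed

lemma ergodic_Ac: "emeasure \<rho> (Ac c) = 0 \<or> emeasure \<rho> (Ac c) = 1"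
  using ergodic[OF Ac_sets] level_invariant by blast

end

lemma (in prob_space) approx_sigma:
  assumes alg: "algebra (space M) Alg" and sub: "Alg \<subseteq> sets M" and G: "G \<in> sigma_sets (space M) Alg"
  shows "\<forall>e>0. \<exists>B\<in>Alg. measure M (G - B) + measure M (B - G) < e"
proof -
  interpret A: algebra "space M" Alg by (rule alg)
  have sig: "sigma_sets (space M) Alg \<subseteq> sets M" by (rule sets.sigma_sets_subset[OF sub])
  have ist: "Int_stable Alg" unfolding Int_stable_def by blast
  from ist A.space_closed G show ?thesis
  proof (induction rule: sigma_sets_induct_disjoint)
    case (basic A)
    then show ?case by (intro allI impI bexI[of _ A]) auto
  next
    case empty
    then show ?case by (intro allI impI bexI[of _ "{}"]) auto
  next
    case (compl A)
    show ?case
    proof (intro allI impI)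
      fix e :: real assume "e > 0"
      then obtain B where B: "B \<in> Alg" "measure M (A - B) + measure M (B - A) < e" using compl.IH by blast
      have AS: "A \<subseteq> space M" using compl.hyps sig sets.sets_into_space by blast
      have BS: "B \<subseteq> space M" using B(1) A.space_closed by blast
      have "(space M - A) - (space M - B) = B - A" using BS by blast
      moreover have "(space M - B) - (space M - A) = A - B" using AS by blast
      ultimately show "\<exists>B\<in>Alg. measure M ((space M - A) - B) + measure M (B - (space M - A)) < e"
        using B by (intro bexI[of _ "space M - B"]) auto
    qed
  next
    case (union A)
    have As: "\<And>i. A i \<in> sets M" using union.hyps(2) sig by blast
    show ?case
    proof (intro allI impI)
      fix e :: real assume e: "e > 0"
      define U where "U N = (\<Union>i<N. A i)" for N
      have Us: "U N \<in> sets M" for N unfolding U_def using As by blast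
      have incU: "incseq U" by (rule incseq_SucI) (auto simp: U_def lessThan_Suc)
      have UU: "(\<Union>N. U N) = (\<Union>i. A i)" unfolding U_def by auto
      have "(\<lambda>N. measure M (U N)) \<longlonglongrightarrow> measure M (\<Union>i. A i)"
        using finite_Lim_measure_incseq[of U] Us incU UU by auto
      from LIMSEQ_D[OF this, of "e/2"] e obtain N where "\<forall>n\<ge>N. norm (measure M (U n) - measure M (\<Union>i. A i)) < e / 2"
        by auto
      then have "norm (measure M (U N) - measure M (\<Union>i. A i)) < e / 2" by blast
      then have N: "measure M (\<Union>i. A i) - measure M (U N) < e / 2" unfolding real_norm_def by linarith
      define \<delta> where "\<delta> = e / (2 * (real N + 1))"
      have \<delta>: "\<delta> > 0" using e by (simp add: \<delta>_def)
      have "\<forall>i. \<exists>B\<in>Alg. measure M (A i - B) + measure M (B - A i) < \<delta>" using union.IH \<delta> by blast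
      then obtain Bf where Bf: "\<And>i. Bf i \<in> Alg" "\<And>i. measure M (A i - Bf i) + measure M (Bf i - A i) < \<delta>"
        by metis
      define B where "B = (\<Union>i<N. Bf i)"
      have BA: "B \<in> Alg" unfolding B_def using Bf(1) by blast
      have Bfs: "\<And>i. Bf i \<in> sets M" using Bf(1) sub by blast
      have UsA: "U N \<subseteq> (\<Union>i. A i)" unfolding U_def by auto
      have m1: "measure M ((\<Union>i. A i) - U N) = measure M (\<Union>i. A i) - measure M (U N)"
        by (rule finite_measure_Diff'[THEN trans]) (use As Us UsA in \<open>auto simp: Int_absorb1 Int_absorb2\<close>)
      have s1: "(\<Union>i. A i) - B \<subseteq> ((\<Union>i. A i) - U N) \<union> (\<Union>i<N. A i - Bf i)"
        unfolding B_def U_def by blast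
      have s2: "B - (\<Union>i. A i) \<subseteq> (\<Union>i<N. Bf i - A i)" unfolding B_def by blast
      have "measure M ((\<Union>i. A i) - B) \<le> measure M (((\<Union>i. A i) - U N) \<union> (\<Union>i<N. A i - Bf i))"
        by (rule finite_measure_mono[OF s1]) (use As Us Bfs in blast)
      also have "\<dots> \<le> measure M ((\<Union>i. A i) - U N) + measure M (\<Union>i<N. A i - Bf i)"
        by (rule measure_Un_le) (use As Us Bfs in blast)+
      also have "measure M (\<Union>i<N. A i - Bf i) \<le> (\<Sum>i<N. measure M (A i - Bf i))"
        by (rule finite_measure_subadditive_finite) (use As Bfs in blast)+
      finally have d1: "measure M ((\<Union>i. A i) - B) \<le> measure M ((\<Union>i. A i) - U N) + (\<Sum>i<N. measure M (A i - Bf i))"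
        by simp
      have "measure M (B - (\<Union>i. A i)) \<le> measure M (\<Union>i<N. Bf i - A i)"
        by (rule finite_measure_mono[OF s2]) (use As Bfs in blast)
      also have "\<dots> \<le> (\<Sum>i<N. measure M (Bf i - A i))"
        by (rule finite_measure_subadditive_finite) (use As Bfs in blast)+
      finally have d2: "measure M (B - (\<Union>i. A i)) \<le> (\<Sum>i<N. measure M (Bf i - A i))" .
      have "(\<Sum>i<N. measure M (A i - Bf i)) + (\<Sum>i<N. measure M (Bf i - A i))
          = (\<Sum>i<N. measure M (A i - Bf i) + measure M (Bf i - A i))"
        by (simp add: sum.distrib)
      also have "\<dots> \<le> (\<Sum>i<N. \<delta>)" by (rule sum_mono) (use Bf(2) less_imp_le in blast)
      also have "\<dots> = real N * \<delta>" by simp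
      also have "\<dots> \<le> e / 2"
        using e by (simp add: \<delta>_def field_simps)
      finally have d3: "(\<Sum>i<N. measure M (A i - Bf i)) + (\<Sum>i<N. measure M (Bf i - A i)) \<le> e / 2" .
      have "measure M ((\<Union>i. A i) - B) + measure M (B - (\<Union>i. A i)) < e"
        using d1 d2 d3 m1 N by linarith
      then show "\<exists>B\<in>Alg. measure M ((\<Union>i. A i) - B) + measure M (B - (\<Union>i. A i)) < e"
        using BA by blast
    qed
  qed
qed

context rds_setting begin

definition Alg :: "'w set set" where "Alg = (\<Union>n::nat. F 0 (real n))"

lemma TTp_nat: "real n \<in> TTp TT" by (simp add: TTp_iff TT_nat)

lemma sa_n: "sigma_algebra (space P) (F 0 (real n))"
  using F_sigma[of 0 "real n"] TT_0 TT_nat by simp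

lemma F0_mono_nat: "m \<le> n \<Longrightarrow> F 0 (real m) \<subseteq> F 0 (real n)"
  using F_mono[of 0 0 "real m" "real n"] TT_0 TT_nat by simp

lemma Alg_algebra: "algebra (space P) Alg"
  unfolding algebra_iff_Un
proof (intro conjI ballI)
  show "Alg \<subseteq> Pow (space P)" unfolding Alg_def using F0t_sets[OF TTp_nat] sets.space_closed by blast
  show "{} \<in> Alg"
  proof -
    interpret s0: sigma_algebra "space P" "F 0 (real 0)" by (rule sa_n)
    show ?thesis unfolding Alg_def using s0.empty_sets by blast
  qed
  fix a assume "a \<in> Alg"
  then obtain n where a: "a \<in> F 0 (real n)" unfolding Alg_def by blast
  interpret sa: sigma_algebra "space P" "F 0 (real n)" by (rule sa_n)
  show "space P - a \<in> Alg" unfolding Alg_def using a by blast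
  fix b assume "b \<in> Alg"
  then obtain m where b: "b \<in> F 0 (real m)" unfolding Alg_def by blast
  interpret sb: sigma_algebra "space P" "F 0 (real (max m n))" by (rule sa_n)
  have "a \<in> F 0 (real (max m n))" "b \<in> F 0 (real (max m n))"
    using a b F0_mono_nat[of n "max m n"] F0_mono_nat[of m "max m n"] by auto
  then have "a \<union> b \<in> F 0 (real (max m n))" by blast
  then show "a \<union> b \<in> Alg" unfolding Alg_def by blast
qed

lemma Alg_sets: "Alg \<subseteq> sets P"
  unfolding Alg_def using F0t_sets[OF TTp_nat] by blast

lemma FA_Alg: "FA = sigma_sets (space P) Alg"
proof -
  have 1: "(\<Union>s\<in>TTp TT. F 0 (0 + s)) \<subseteq> Alg"
  proof
    fix a assume "a \<in> (\<Union>s\<in>TTp TT. F 0 (0 + s))"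
    then obtain s where s: "s \<in> TTp TT" "a \<in> F 0 s" by auto
    have "s \<le> real (nat \<lceil>s\<rceil>)" by linarith
    then have "F 0 s \<subseteq> F 0 (real (nat \<lceil>s\<rceil>))"
      using F_mono[of 0 0 s "real (nat \<lceil>s\<rceil>)"] TT_0 TT_nat TT_int[of "\<lceil>s\<rceil>"] s(1) by (simp add: TTp_iff)
    then show "a \<in> Alg" unfolding Alg_def using s(2) by blast
  qed
  have 2: "Alg \<subseteq> (\<Union>s\<in>TTp TT. F 0 (0 + s))"
    unfolding Alg_def using TTp_nat by auto
  show ?thesis unfolding FA_def future_alg_def
    using sigma_sets_mono'[OF 1] sigma_sets_mono'[OF 2] by (rule antisym)
qed

lemma c_exists:
  assumes pos: "emeasure (P \<Otimes>\<^sub>M \<rho>) Ost > 0"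
  shows "\<exists>c>0. AE x in \<rho>. x \<in> Ac c"
proof (rule ccontr)
  interpret R: prob_space \<rho> by (rule rho_prob)
  assume H: "\<not> (\<exists>c>0. AE x in \<rho>. x \<in> Ac c)"
  have z: "emeasure \<rho> (Ac (1 / (real n + 1))) = 0" for n
  proof -
    have "emeasure \<rho> (Ac (1 / (real n + 1))) \<noteq> 1"
    proof
      assume "emeasure \<rho> (Ac (1 / (real n + 1))) = 1"
      then have "R.prob (Ac (1 / (real n + 1))) = 1" by (simp add: R.emeasure_eq_measure)
      then have "AE x in \<rho>. x \<in> Ac (1 / (real n + 1))" by (rule R.AE_prob_1)
      moreover have "(1::real) / (real n + 1) > 0" by simp
      ultimately show False using H by blast
    qed
    then show ?thesis using ergodic_Ac by blast
  qed
  have "AE x in \<rho>. \<forall>n. x \<notin> Ac (1 / (real n + 1))"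
    unfolding AE_all_countable using z Ac_rho by (intro allI AE_not_in) auto
  then have ae0: "AE x in \<rho>. fS x = 0"
  proof (rule AE_mp[OF _ AE_I2], intro impI)
    fix x assume x: "x \<in> space \<rho>" and nx: "\<forall>n. x \<notin> Ac (1 / (real n + 1))"
    then have xX: "x \<in> X" by (simp add: space_rho)
    have lt: "fS x < ennreal (1 / (real n + 1))" for n using nx xX by (auto simp: Ac_def not_le)
    have "fS x \<noteq> \<top>" using fS_le1[of x] by (metis ennreal_one_less_top top.not_eq_extremum order.strict_trans1)
    then obtain r where r: "fS x = ennreal r" "0 \<le> r" by (cases "fS x") auto
    show "fS x = 0"
    proof (rule ccontr)
      assume "fS x \<noteq> 0"
      then have "r > 0" using r by auto
      then obtain n where n: "inverse (real (Suc n)) < r" using reals_Archimedean by blast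
      have "ennreal (1 / (real n + 1)) < ennreal r"
        using n by (simp add: ennreal_less_iff inverse_eq_divide add.commute)
      then show False using lt[of n] r(1) by simp
    qed
  qed
  have "(\<integral>\<^sup>+ x. fS x \<partial>\<rho>) = 0"
    using ae0 by (simp add: nn_integral_0_iff_AE[OF fS_meas_rho])
  then show False using pos by (simp add: emeasure_Ost)
qed

lemma fS_one:
  assumes c: "c > 0" and AEc: "AE x in \<rho>. x \<in> Ac c"
  shows "AE x in \<rho>. fS x = 1"
proof -
  interpret Pp: prob_space P by (rule P_prob)
  have "\<forall>n::nat. AE x in \<rho>. emeasure (transition P X \<phi> (real n) x) (Ac c) = indicator (Ac c) x"
    using level_invariant[OF TTp_nat] by blast
  then have "AE x in \<rho>. \<forall>n::nat. emeasure (transition P X \<phi> (real n) x) (Ac c) = indicator (Ac c) x"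
    by (simp add: AE_all_countable)
  with AEc show ?thesis
  proof (eventually_elim)
    case (elim x)
    then have xA: "x \<in> Ac c" and tr: "\<And>n. emeasure (transition P X \<phi> (real n) x) (Ac c) = 1" by auto
    have x: "x \<in> X" using xA by (simp add: Ac_def)
    have aeo: "AE \<omega> in P. c \<le> fS (\<phi> (real n) \<omega> x)" for n
    proof -
      have S: "{\<omega>\<in>space P. \<phi> (real n) \<omega> x \<in> Ac c} \<in> sets P"
      proof -
        have "{\<omega>\<in>space P. \<phi> (real n) \<omega> x \<in> Ac c} = (\<lambda>\<omega>. \<phi> (real n) \<omega> x) -` Ac c \<inter> space P" by blast
        then show ?thesis using measurable_sets[OF phi_meas_P[OF TTp_nat x] Ac_sets] by simp
      qed
      have "emeasure P {\<omega>\<in>space P. \<phi> (real n) \<omega> x \<in> Ac c} = 1"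
        using tr[of n] transition_emeasure[OF TTp_nat x Ac_sets] by simp
      then have "Pp.prob {\<omega>\<in>space P. \<phi> (real n) \<omega> x \<in> Ac c} = 1" by (simp add: Pp.emeasure_eq_measure)
      then have "AE \<omega> in P. \<omega> \<in> {\<omega>\<in>space P. \<phi> (real n) \<omega> x \<in> Ac c}" by (rule Pp.AE_prob_1)
      then show ?thesis by (rule AE_mp) (auto intro!: AE_I2 simp: Ac_def)
    qed
    have key: "c * Pp.prob B \<le> Pp.prob (Oset x \<inter> B)" if B: "B \<in> Alg" for B
    proof -
      obtain n where Bn: "B \<in> F 0 (real n)" using B unfolding Alg_def by blast
      have BP: "B \<in> sets P" using Bn F0t_sets[OF TTp_nat] by blast
      have "ennreal c * emeasure P B = (\<integral>\<^sup>+ \<omega>. ennreal c * indicator B \<omega> \<partial>P)"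
        by (rule nn_integral_cmult_indicator[OF BP, symmetric])
      also have "\<dots> \<le> (\<integral>\<^sup>+ \<omega>. indicator B \<omega> * fS (\<phi> (real n) \<omega> x) \<partial>P)"
        using aeo[of n] by (intro nn_integral_mono_AE) (auto elim!: eventually_mono simp: indicator_def)
      also have "\<dots> \<le> emeasure P (Oset x \<inter> B)" by (rule super_G[OF TTp_nat x Bn])
      finally have "ennreal c * ennreal (Pp.prob B) \<le> ennreal (Pp.prob (Oset x \<inter> B))"
        by (simp add: Pp.emeasure_eq_measure)
      then show ?thesis using c by (simp add: ennreal_mult''[symmetric] ennreal_le_iff)
    qed
    define G where "G = space P - Oset x"
    have OP: "Oset x \<in> sets P" by (rule Oset_sets)
    have GP: "G \<in> sets P" unfolding G_def using OP by blast
    have GFA: "G \<in> sigma_sets (space P) Alg"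
    proof -
      have "Oset x \<in> sigma_sets (space P) Alg" using Oset_FA FA_Alg by simp
      then show ?thesis unfolding G_def by (rule sigma_sets.Compl)
    qed
    have approx: "\<forall>e>0. \<exists>B\<in>Alg. Pp.prob (G - B) + Pp.prob (B - G) < e"
      by (rule Pp.approx_sigma[OF Alg_algebra Alg_sets GFA])
    have "c * Pp.prob G \<le> 0"
    proof (rule field_le_epsilon)
      fix e :: real assume e: "0 < e"
      define e' where "e' = e / (c + 1)"
      have e': "e' > 0" using e c by (simp add: e'_def)
      obtain B where B: "B \<in> Alg" "Pp.prob (G - B) + Pp.prob (B - G) < e'" using approx e' by blast
      have BP: "B \<in> sets P" using B(1) Alg_sets by blast
      have "Oset x \<inter> B \<subseteq> B - G" unfolding G_def using OP sets.sets_into_space by blast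
      then have "Pp.prob (Oset x \<inter> B) \<le> Pp.prob (B - G)"
        by (rule Pp.finite_measure_mono) (use BP GP in blast)
      then have cB: "c * Pp.prob B \<le> Pp.prob (B - G)" using key[OF B(1)] by linarith
      have "G \<subseteq> (G - B) \<union> B" by blast
      then have "Pp.prob G \<le> Pp.prob ((G - B) \<union> B)" by (rule Pp.finite_measure_mono) (use BP GP in blast)
      also have "\<dots> \<le> Pp.prob (G - B) + Pp.prob B" by (rule measure_Un_le) (use BP GP in blast)+
      finally have "c * Pp.prob G \<le> c * Pp.prob (G - B) + c * Pp.prob B"
        using c by (metis distrib_left mult_left_mono less_imp_le)
      also have "\<dots> \<le> c * Pp.prob (G - B) + Pp.prob (B - G)" using cB by linarith
      also have "\<dots> \<le> (c + 1) * e'"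
      proof -
        have "Pp.prob (G - B) \<le> e'" "Pp.prob (B - G) \<le> e'" using B(2) measure_nonneg[of P "G - B"]
            measure_nonneg[of P "B - G"] by linarith+
        moreover have "c * Pp.prob (G - B) \<le> c * e'" using \<open>Pp.prob (G - B) \<le> e'\<close> c
          by (intro mult_left_mono) auto
        ultimately show ?thesis by (simp add: distrib_right)
      qed
      also have "\<dots> = e" using c by (simp add: e'_def)
      finally show "c * Pp.prob G \<le> 0 + e" by simp
    qed
    then have "Pp.prob G = 0" using c measure_nonneg[of P G] by (simp add: mult_le_0_iff)
    then have "Pp.prob (Oset x) = 1" using Pp.prob_compl[OF OP] unfolding G_def by simp
    then show "fS x = 1" by (simp add: fS_Oset Pp.emeasure_eq_measure)
  qed
qed

lemma ii_imp_i:
  assumes pos: "emeasure (P \<Otimes>\<^sub>M \<rho>) Ost > 0"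
  shows "emeasure (P \<Otimes>\<^sub>M \<rho>) Ost = 1"
proof -
  interpret R: prob_space \<rho> by (rule rho_prob)
  obtain c where c: "c > 0" "AE x in \<rho>. x \<in> Ac c" using c_exists[OF pos] by blast
  have "AE x in \<rho>. fS x = 1" by (rule fS_one[OF c])
  then have "(\<integral>\<^sup>+ x. fS x \<partial>\<rho>) = (\<integral>\<^sup>+ x. 1 \<partial>\<rho>)" by (rule nn_integral_cong_AE)
  then show ?thesis by (simp add: emeasure_Ost R.emeasure_space_1)
qed

end

context rds_setting begin

definition Bl :: "'x \<Rightarrow> nat \<Rightarrow> 'x set" where "Bl d k = X \<inter> ball d (1 / (real k + 1))"

lemma openin_sets_rho: "openin (top_of_set X) U \<Longrightarrow> U \<in> sets \<rho>"
proof -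
  assume "openin (top_of_set X) U"
  then obtain V where V: "open V" "U = X \<inter> V" by (auto simp: openin_open)
  have "X \<inter> V \<in> sets (borelX X)" unfolding sets_restrict_space using V(1) by auto
  then show ?thesis using V(2) sets_rho by simp
qed

lemma Bl_open: "openin (top_of_set X) (Bl d k)"
  unfolding Bl_def by (rule openin_open_Int) simp

lemma Bl_sets: "Bl d k \<in> sets \<rho>" by (rule openin_sets_rho[OF Bl_open])

lemma ball_cover:
  assumes U: "openin (top_of_set X) U" and y: "y \<in> U"
  shows "\<exists>d\<in>D. \<exists>k. y \<in> Bl d k \<and> Bl d k \<subseteq> U"
proof -
  have yX: "y \<in> X" using U y openin_imp_subset by blast
  have "\<forall>x\<in>U. \<exists>e>0. \<forall>x'\<in>X. dist x' x < e \<longrightarrow> x' \<in> U"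
    using U unfolding openin_euclidean_subtopology_iff by (rule conjunct2)
  then obtain e where e: "e > 0" "\<forall>x'\<in>X. dist x' y < e \<longrightarrow> x' \<in> U" using y by blast
  obtain k where k: "inverse (real (Suc k)) < e / 2" using reals_Archimedean e(1) by (metis half_gt_zero)
  define r where "r = 1 / (real k + 1)"
  have r: "r > 0" "2 * r < e" using k by (auto simp: r_def inverse_eq_divide add.commute)
  have "y \<in> closure D" using yX D_props(3) by blast
  then obtain d where d: "d \<in> D" "dist d y < r" using r(1) unfolding closure_approachable by blast
  have "y \<in> Bl d k" using yX d(2) by (simp add: Bl_def r_def dist_commute)
  moreover have "Bl d k \<subseteq> U"
  proof
    fix z assume z: "z \<in> Bl d k"
    then have zX: "z \<in> X" and zd: "dist d z < r" by (auto simp: Bl_def r_def)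
    have "dist z y \<le> dist z d + dist d y" by (rule dist_triangle)
    also have "\<dots> < e" using zd d(2) r(2) by (simp add: dist_commute)
    finally show "z \<in> U" using e(2) zX by blast
  qed
  ultimately show ?thesis using d(1) by blast
qed

lemma supp_ae: "AE x in \<rho>. x \<in> supp X \<rho>"
proof -
  define N where "N = (\<Union>d\<in>D. \<Union>k. if emeasure \<rho> (Bl d k) = 0 then Bl d k else {})"
  have Nn: "N \<in> null_sets \<rho>"
    unfolding N_def
    by (intro null_sets_UN' D_props(1) null_sets_UN) (auto simp: Bl_sets)
  have "{x\<in>space \<rho>. x \<notin> supp X \<rho>} \<subseteq> N"
  proof
    fix x assume "x \<in> {x\<in>space \<rho>. x \<notin> supp X \<rho>}"
    then have x: "x \<in> X" "x \<notin> supp X \<rho>" by (auto simp: space_rho)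
    then obtain U where U: "openin (top_of_set X) U" "x \<in> U" "\<not> emeasure \<rho> U > 0"
      unfolding supp_def by blast
    have U0: "emeasure \<rho> U = 0" using U(3) by (simp add: not_gr_zero)
    obtain d k where dk: "d \<in> D" "x \<in> Bl d k" "Bl d k \<subseteq> U" using ball_cover[OF U(1,2)] by blast
    have "emeasure \<rho> (Bl d k) \<le> emeasure \<rho> U" by (rule emeasure_mono[OF dk(3) openin_sets_rho[OF U(1)]])
    then have "emeasure \<rho> (Bl d k) = 0" using U0 by simp
    then show "x \<in> N" unfolding N_def using dk by auto
  qed
  then show ?thesis by (rule AE_I'[OF Nn])
qed

lemma contracts_Bl_sets: "{\<omega>\<in>space P. contracts TT \<phi> \<omega> (Bl d k)} \<in> sets P"
proof -
  have eq: "{\<omega>\<in>space P. contracts TT \<phi> \<omega> (Bl d k)} =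
    {\<omega>\<in>space P. \<forall>m::nat. \<exists>j::nat. \<forall>t\<in>Tq. real j \<le> t \<longrightarrow>
     (\<forall>y\<in>D. \<forall>z\<in>D. dist d y < 1 / (real k + 1) \<longrightarrow> dist d z < 1 / (real k + 1) \<longrightarrow>
        dist (\<phi> t \<omega> y) (\<phi> t \<omega> z) \<le> 1 / (real m + 1))}"
    unfolding Bl_def
    by (rule Collect_cong, rule conj_cong[OF refl], rule contracts_ball_iff)
  have inner: "{\<omega>\<in>space P. dist d y < a \<longrightarrow> dist d z < a \<longrightarrow> dist (\<phi> t \<omega> y) (\<phi> t \<omega> z) \<le> b} \<in> sets P"
    if t: "t \<in> Tq" and y: "y \<in> D" and z: "z \<in> D" for t y z a b
  proof -
    have my: "(\<lambda>\<omega>. \<phi> t \<omega> y) \<in> borel_measurable P"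
      using phi_meas_P[OF Tq_TTp[OF t]] y D_props(2) by (auto simp: measurable_restrict_space2_iff)
    have mz: "(\<lambda>\<omega>. \<phi> t \<omega> z) \<in> borel_measurable P"
      using phi_meas_P[OF Tq_TTp[OF t]] z D_props(2) by (auto simp: measurable_restrict_space2_iff)
    show ?thesis
      by (intro sets.sets_Collect_imp sets.sets_Collect_const sets_le borel_measurable_dist my mz)
  qed
  show ?thesis
    unfolding eq
    apply (rule sets.sets_Collect_countable_All)
    apply (rule sets.sets_Collect_countable_Ex)
    apply (rule sets.sets_Collect_countable_All'[OF _ countable_Tq])
    apply (rule sets.sets_Collect_imp)
     apply (rule sets.sets_Collect_countable_All'[OF _ D_props(1)])
     apply (rule sets.sets_Collect_countable_All'[OF _ D_props(1)])
     apply (rule inner; assumption)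
    apply (rule sets.sets_Collect_const)
    done
qed

definition S3 :: "'w set" where
  "S3 = {\<omega> \<in> space P. \<exists>U. openin (top_of_set X) U \<and> U \<inter> supp X \<rho> \<noteq> {} \<and> contracts TT \<phi> \<omega> U}"

lemma S3_eq: "S3 = {\<omega> \<in> space P. \<exists>d\<in>D. \<exists>k. Bl d k \<inter> supp X \<rho> \<noteq> {} \<and> contracts TT \<phi> \<omega> (Bl d k)}"
proof (intro set_eqI iffI)
  fix \<omega> assume "\<omega> \<in> S3"
  then obtain U y where U: "\<omega> \<in> space P" "openin (top_of_set X) U" "y \<in> U" "y \<in> supp X \<rho>" "contracts TT \<phi> \<omega> U"
    unfolding S3_def by blast
  obtain d k where dk: "d \<in> D" "y \<in> Bl d k" "Bl d k \<subseteq> U" using ball_cover[OF U(2,3)] by blast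
  have "contracts TT \<phi> \<omega> (Bl d k)" using contracts_mono[OF U(5) dk(3)] .
  then show "\<omega> \<in> {\<omega> \<in> space P. \<exists>d\<in>D. \<exists>k. Bl d k \<inter> supp X \<rho> \<noteq> {} \<and> contracts TT \<phi> \<omega> (Bl d k)}"
    using U(1,4) dk by blast
next
  fix \<omega> assume "\<omega> \<in> {\<omega> \<in> space P. \<exists>d\<in>D. \<exists>k. Bl d k \<inter> supp X \<rho> \<noteq> {} \<and> contracts TT \<phi> \<omega> (Bl d k)}"
  then show "\<omega> \<in> S3" unfolding S3_def using Bl_open by blast
qed

lemma S3_sets: "S3 \<in> sets P"
  unfolding S3_eq
  by (intro sets.sets_Collect_countable_Ex' D_props(1) sets.sets_Collect_countable_Ex
      sets.sets_Collect_conj sets.sets_Collect_const contracts_Bl_sets)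

lemma emeasure_Ost_alt: "emeasure (P \<Otimes>\<^sub>M \<rho>) Ost = (\<integral>\<^sup>+ \<omega>. emeasure \<rho> (Pair \<omega> -` Ost) \<partial>P)"
proof -
  interpret R: sigma_finite_measure \<rho> using rho_prob by (rule prob_space_imp_sigma_finite)
  show ?thesis by (rule R.emeasure_pair_measure_alt[OF Ost_PR])
qed

lemma slice_meas: "(\<lambda>\<omega>. emeasure \<rho> (Pair \<omega> -` Ost)) \<in> borel_measurable P"
  by (rule pair_sigma_finite.measurable_emeasure_Pair1[OF pair_PR_sf Ost_PR])

lemma ii_imp_iii:
  assumes pos: "emeasure (P \<Otimes>\<^sub>M \<rho>) Ost > 0"
  shows "emeasure P S3 > 0"
proof -
  define T where "T = {\<omega>\<in>space P. emeasure \<rho> (Pair \<omega> -` Ost) \<noteq> 0}"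
  have Ts: "T \<in> sets P"
  proof -
    have "(\<lambda>\<omega>. emeasure \<rho> (Pair \<omega> -` Ost)) -` (UNIV - {0}) \<inter> space P \<in> sets P"
      by (rule measurable_sets[OF slice_meas]) simp
    moreover have "T = (\<lambda>\<omega>. emeasure \<rho> (Pair \<omega> -` Ost)) -` (UNIV - {0}) \<inter> space P"
      unfolding T_def by blast
    ultimately show ?thesis by simp
  qed
  have TS3: "T \<subseteq> S3"
  proof
    fix \<omega> assume "\<omega> \<in> T"
    then have \<omega>: "\<omega> \<in> space P" and ne: "emeasure \<rho> (Pair \<omega> -` Ost) \<noteq> 0" by (auto simp: T_def)
    have Sl: "Pair \<omega> -` Ost \<in> sets \<rho>" by (rule sets_Pair1[OF Ost_PR])
    have "Pair \<omega> -` Ost \<inter> supp X \<rho> \<noteq> {}"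
    proof
      assume emp: "Pair \<omega> -` Ost \<inter> supp X \<rho> = {}"
      have aeS: "AE x in \<rho>. x \<notin> Pair \<omega> -` Ost" using supp_ae
      proof (rule AE_mp, intro AE_I2 impI)
        fix x assume "x \<in> supp X \<rho>"
        then show "x \<notin> Pair \<omega> -` Ost" using emp by blast
      qed
      have eqN: "{x\<in>space \<rho>. \<not> x \<notin> Pair \<omega> -` Ost} = Pair \<omega> -` Ost"
        using sets.sets_into_space[OF Sl] by auto
      have "emeasure \<rho> (Pair \<omega> -` Ost) = 0" by (rule AE_iff_measurable[OF Sl eqN, THEN iffD1, OF aeS])
      then show False using ne by simp
    qed
    then obtain x where x: "(\<omega>, x) \<in> Ost" "x \<in> supp X \<rho>" by auto
    then have "asymp_stable TT X \<phi> \<omega> x" by (simp add: Ost_def)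
    then obtain N U where NU: "openin (top_of_set X) U" "x \<in> U" "U \<subseteq> N" "contracts TT \<phi> \<omega> N"
      unfolding asymp_stable_def by blast
    have "contracts TT \<phi> \<omega> U" using contracts_mono[OF NU(4) NU(3)] .
    then show "\<omega> \<in> S3" unfolding S3_def using \<omega> NU(1,2) x(2) by blast
  qed
  have "emeasure P T \<noteq> 0"
  proof
    assume T0: "emeasure P T = 0"
    have "T \<in> null_sets P" using T0 Ts by (rule null_setsI)
    then have "AE \<omega> in P. \<omega> \<notin> T" by (rule AE_not_in)
    then have "AE \<omega> in P. emeasure \<rho> (Pair \<omega> -` Ost) = 0"
    proof (rule AE_mp, intro AE_I2 impI)
      fix \<omega> assume "\<omega> \<in> space P" "\<omega> \<notin> T"
      then show "emeasure \<rho> (Pair \<omega> -` Ost) = 0" unfolding T_def by blast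
    qed
    then have "(\<integral>\<^sup>+ \<omega>. emeasure \<rho> (Pair \<omega> -` Ost) \<partial>P) = 0" by (rule nn_integral_0_iff_AE[OF slice_meas, THEN iffD2])
    then show False using pos by (simp add: emeasure_Ost_alt)
  qed
  then have "0 < emeasure P T" by (metis not_gr_zero)
  moreover have "emeasure P T \<le> emeasure P S3" by (rule emeasure_mono[OF TS3 S3_sets])
  ultimately show ?thesis by (rule order.strict_trans2)
qed

lemma iii_imp_ii:
  assumes pos: "emeasure P S3 > 0"
  shows "emeasure (P \<Otimes>\<^sub>M \<rho>) Ost > 0"
proof (rule ccontr)
  assume "\<not> emeasure (P \<Otimes>\<^sub>M \<rho>) Ost > 0"
  then have "(\<integral>\<^sup>+ \<omega>. emeasure \<rho> (Pair \<omega> -` Ost) \<partial>P) = 0" by (simp add: emeasure_Ost_alt not_gr_zero)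
  then have ae: "AE \<omega> in P. emeasure \<rho> (Pair \<omega> -` Ost) = 0" by (rule nn_integral_0_iff_AE[OF slice_meas, THEN iffD1])
  have aeS: "AE \<omega> in P. \<omega> \<notin> S3" using ae
  proof (rule AE_mp, intro AE_I2 impI)
    fix \<omega> assume \<omega>: "\<omega> \<in> space P" and z: "emeasure \<rho> (Pair \<omega> -` Ost) = 0"
    show "\<omega> \<notin> S3"
    proof
      assume "\<omega> \<in> S3"
      then obtain U y where U: "openin (top_of_set X) U" "y \<in> U" "y \<in> supp X \<rho>" "contracts TT \<phi> \<omega> U"
        unfolding S3_def by blast
      have UX: "U \<subseteq> X" using U(1) openin_imp_subset by blast
      have "U \<subseteq> Pair \<omega> -` Ost"
      proof
        fix x assume x: "x \<in> U"
        have "asymp_stable TT X \<phi> \<omega> x" unfolding asymp_stable_def using UX U(1,4) x by blast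
        then show "x \<in> Pair \<omega> -` Ost" using \<omega> x UX by (auto simp: Ost_def)
      qed
      then have "emeasure \<rho> U \<le> emeasure \<rho> (Pair \<omega> -` Ost)" by (rule emeasure_mono[OF _ sets_Pair1[OF Ost_PR]])
      moreover have "emeasure \<rho> U > 0" using U(1,2,3) unfolding supp_def by blast
      ultimately show False using z by simp
    qed
  qed
  have eqN: "{\<omega>\<in>space P. \<not> \<omega> \<notin> S3} = S3" using sets.sets_into_space[OF S3_sets] by auto
  have "emeasure P S3 = 0" by (rule AE_iff_measurable[OF S3_sets eqN, THEN iffD1, OF aeS])
  then show False using pos by simp
qed

end

theorem lemma2p1:
  fixes TT :: "real set" and P :: "'w measure" and F :: "real \<Rightarrow> real \<Rightarrow> 'w set set"
    and \<theta> :: "real \<Rightarrow> 'w \<Rightarrow> 'w" and X :: "'x::polish_space set"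
    and \<phi> :: "real \<Rightarrow> 'w \<Rightarrow> 'x \<Rightarrow> 'x" and \<rho> :: "'x measure"
  assumes noise: "memoryless_noise TT P F \<theta>"
    and X_borel: "X \<in> sets borel"
    and rds: "RDS TT P F \<theta> X \<phi>"
    and erg: "ergodic_stationary TT P X \<phi> \<rho>"
  defines "Ost \<equiv> {(\<omega>, x). \<omega> \<in> space P \<and> x \<in> X \<and> asymp_stable TT X \<phi> \<omega> x}"
  shows "(emeasure (P \<Otimes>\<^sub>M \<rho>) Ost = 1 \<longleftrightarrow> emeasure (P \<Otimes>\<^sub>M \<rho>) Ost > 0) \<and>
         (emeasure (P \<Otimes>\<^sub>M \<rho>) Ost > 0 \<longleftrightarrow>
          emeasure P {\<omega> \<in> space P. \<exists>U. openin (top_of_set X) U \<and> U \<inter> supp X \<rho> \<noteq> {}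
                                        \<and> contracts TT \<phi> \<omega> U} > 0)"
proof -
  interpret R: rds_setting TT P F \<theta> X \<phi> \<rho>
    using noise X_borel rds erg by (rule rds_setting.intro)
  have O: "Ost = R.Ost" unfolding Ost_def R.Ost_def ..
  have S: "{\<omega> \<in> space P. \<exists>U. openin (top_of_set X) U \<and> U \<inter> supp X \<rho> \<noteq> {} \<and> contracts TT \<phi> \<omega> U} = R.S3"
    unfolding R.S3_def ..
  have 1: "emeasure (P \<Otimes>\<^sub>M \<rho>) R.Ost = 1 \<longleftrightarrow> emeasure (P \<Otimes>\<^sub>M \<rho>) R.Ost > 0"
    using R.ii_imp_i by (metis zero_less_one)
  have 2: "emeasure (P \<Otimes>\<^sub>M \<rho>) R.Ost > 0 \<longleftrightarrow> emeasure P R.S3 > 0"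
    using R.ii_imp_iii R.iii_imp_ii by blast
  show ?thesis unfolding O S using 1 2 by (rule conjI)
qed

end
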